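(* Let $X$ be a uniformly joinable, chain connected Hausdorff uniform space and let $f\colon X\to Y$ generate the uniform structure of the (Hausdorff) uniform space $Y$. The following are equivalent: (a) $f$ is a generalized uniform covering map; (b) $f$ satisfies conditions GP1 and GP2; (c) $\widetilde f\colon GP(X,x_0)\to GP(Y,f(x_0))$ is a uniform equivalence for some $x_0\in X$.
   Context: $f(E)=\{(f(x),f(y)):(x,y)\in E\}$; a surjection $f$ generates the uniform structure of its range if the sets $f(E)$ form a base of it. $R(X,E)$ is the Rips complex (vertex set $X$, simplices the finite $F$ with $F\times F\subset E$); $e(x,y)$ the edge-path; $E$-chains $x_0,\dots,x_n$ ($(x_i,x_{i+1})\in E$) are regarded as edge-paths in $R(X,E)$. $X$ is chain connected if for each $E$ any two points are joined by an $E$-chain. Paths $c,d$ in $R(X,E)$ with end-points in $X$ are $E$-homotopic if their initial points $x_c,x_d$ and terminal points $y_c,y_d$ satisfy $(x_c,x_d),(y_c,y_d)\in E$ and $c\simeq e(x_c,x_d)\ast d\ast e(y_d,y_c)$ rel. end-points in $R(X,E)$. A generalized path from $x$ to $y$ is a family $\{[c_E]\}_E$ of homotopy classes rel. end-points of paths from $x$ to $y$ in $R(X,E)$ with $c_F\simeq c_E$ in $R(X,E)$ for $F\subset E$; it is $F$-short if $(x,y)\in F$ and $c_F\simeq e(x,y)$ in $R(X,F)$; generalized paths $c,d$ are $F$-homotopic if $c_F$ is $F$-homotopic to $d_F$. $GP(X,x_0)$: generalized paths from $x_0$ with uniform base $F^\ast=\{(c,d): c,d\ F\text{-homotopic}\}$.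 $\widetilde f(c)_F=[f_E(c_E)]$, $E=f^{-1}(F)$. $X$ is uniformly joinable if for each $E$ there is $F$ with any $(x,y)\in F$ joined by an $E$-short generalized path. A generalized uniform covering map is an $f$ generating the uniform structure of $Y$ with: GP1: for every $x_0$ every generalized path in $Y$ from $f(x_0)$ is $\widetilde f(d)$ for a generalized path $d$ from $x_0$; GP2: for every entourage $E$ of $X$ there is $F$ such that generalized paths $\alpha,\beta$ in $X$ with common origin are $E$-homotopic if $\widetilde f(\alpha),\widetilde f(\beta)$ are $f(F)$-homotopic; C1: for every $E$ there is $F$ such that every $f(F)$-chain starting at $f(x_0)$ lifts to an $E$-chain starting at $x_0$; C2: for every $E$ there is $F$ such that $F$-chains $\alpha,\beta$ with common origin are $E$-homotopic if $f(\alpha),f(\beta)$ are $f(F)$-homotopic. *)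

theory Defs
  imports Main
begin

definition uniformity :: "'a set \<Rightarrow> ('a \<times> 'a) set set \<Rightarrow> bool" where
  "uniformity X U \<longleftrightarrow> U \<noteq> {}
     \<and> (\<forall>E\<in>U. Id_on X \<subseteq> E \<and> E \<subseteq> X \<times> X)
     \<and> (\<forall>E\<in>U. \<forall>F. E \<subseteq> F \<and> F \<subseteq> X \<times> X \<longrightarrow> F \<in> U)
     \<and> (\<forall>E\<in>U. \<forall>F\<in>U. E \<inter> F \<in> U)
     \<and> (\<forall>E\<in>U. E\<inverse> \<in> U)
     \<and> (\<forall>E\<in>U. \<exists>F\<in>U. F O F \<subseteq> E)"

definition hausdorff_unif :: "'a set \<Rightarrow> ('a \<times> 'a) set set \<Rightarrow> bool" where
  "hausdorff_unif X U \<longleftrightarrow> \<Inter>U = Id_on X"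

text \<open>Symmetric entourages (the paper's entourages are symmetric).\<close>
definition SE :: "('a \<times> 'a) set set \<Rightarrow> ('a \<times> 'a) set set" where
  "SE U = {E \<in> U. sym E}"

definition pimage :: "('a \<Rightarrow> 'b) \<Rightarrow> ('a \<times> 'a) set \<Rightarrow> ('b \<times> 'b) set" where
  "pimage f E = (\<lambda>(x, y). (f x, f y)) ` E"

definition generates_unif ::
  "('a \<Rightarrow> 'b) \<Rightarrow> 'a set \<Rightarrow> ('a \<times> 'a) set set \<Rightarrow> 'b set \<Rightarrow> ('b \<times> 'b) set set \<Rightarrow> bool" where
  "generates_unif f X U Y V \<longleftrightarrow> f ` X = Y
     \<and> (\<forall>E\<in>U. pimage f E \<in> V) \<and> (\<forall>W\<in>V. \<exists>E\<in>U. pimage f E \<subseteq> W)"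

definition ucont ::
  "'a set \<Rightarrow> ('a \<times> 'a) set set \<Rightarrow> ('b \<times> 'b) set set \<Rightarrow> ('a \<Rightarrow> 'b) \<Rightarrow> bool" where
  "ucont A UA UB g \<longleftrightarrow> (\<forall>W\<in>UB. {(a, b). a \<in> A \<and> b \<in> A \<and> (g a, g b) \<in> W} \<in> UA)"

definition uniform_equivalence ::
  "'a set \<Rightarrow> ('a \<times> 'a) set set \<Rightarrow> 'b set \<Rightarrow> ('b \<times> 'b) set set \<Rightarrow> ('a \<Rightarrow> 'b) \<Rightarrow> bool" where
  "uniform_equivalence A UA B UB g \<longleftrightarrow> bij_betw g A B
     \<and> ucont A UA UB g \<and> ucont B UB UA (inv_into A g)"

definition rips_simplex :: "('a \<times> 'a) set \<Rightarrow> 'a set \<Rightarrow> bool" where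
  "rips_simplex E S \<longleftrightarrow> finite S \<and> S \<noteq> {} \<and> S \<times> S \<subseteq> E"

definition edgepath :: "('a \<times> 'a) set \<Rightarrow> 'a list \<Rightarrow> bool" where
  "edgepath E p \<longleftrightarrow> p \<noteq> [] \<and> (\<forall>x\<in>set p. rips_simplex E {x})
     \<and> (\<forall>i. Suc i < length p \<longrightarrow> rips_simplex E {p ! i, p ! Suc i})"

definition epstep :: "('a \<times> 'a) set \<Rightarrow> 'a list \<Rightarrow> 'a list \<Rightarrow> bool" where
  "epstep E p q \<longleftrightarrow>
     (\<exists>a b x. p = a @ [x, x] @ b \<and> q = a @ [x] @ b) \<or>
     (\<exists>a b x y z. p = a @ [x, y, z] @ b \<and> q = a @ [x, z] @ b \<and> rips_simplex E {x, y, z})"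

definition epstepR :: "('a \<times> 'a) set \<Rightarrow> ('a list \<times> 'a list) set" where
  "epstepR E = {(p, q). edgepath E p \<and> edgepath E q \<and> epstep E p q}"

text \<open>Homotopy rel. end-points of edge-paths in R(X,E) (edge-path equivalence).\<close>
definition ephtp :: "('a \<times> 'a) set \<Rightarrow> 'a list \<Rightarrow> 'a list \<Rightarrow> bool" where
  "ephtp E p q \<longleftrightarrow> edgepath E p \<and> edgepath E q
     \<and> (p, q) \<in> (epstepR E \<union> (epstepR E)\<inverse>)\<^sup>*"

definition epclass :: "('a \<times> 'a) set \<Rightarrow> 'a list \<Rightarrow> 'a list set" where
  "epclass E p = {q. ephtp E p q}"

text \<open>E-homotopy of paths: c ~ e(x_c,x_d) * d * e(y_d,y_c) rel end-points.\<close>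
definition ehtp :: "('a \<times> 'a) set \<Rightarrow> 'a list \<Rightarrow> 'a list \<Rightarrow> bool" where
  "ehtp E c d \<longleftrightarrow> (hd c, hd d) \<in> E \<and> (last c, last d) \<in> E
     \<and> ephtp E c ([hd c] @ d @ [last c])"

definition echain :: "'a set \<Rightarrow> ('a \<times> 'a) set \<Rightarrow> 'a list \<Rightarrow> bool" where
  "echain X E p \<longleftrightarrow> p \<noteq> [] \<and> set p \<subseteq> X \<and> (\<forall>i. Suc i < length p \<longrightarrow> (p ! i, p ! Suc i) \<in> E)"

definition chain_connected :: "'a set \<Rightarrow> ('a \<times> 'a) set set \<Rightarrow> bool" where
  "chain_connected X U \<longleftrightarrow> (\<forall>E\<in>SE U. \<forall>x\<in>X. \<forall>y\<in>X.
     \<exists>p. echain X E p \<and> hd p = x \<and> last p = y)"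

text \<open>A generalized path is a family E \<mapsto> c E of edge-path homotopy classes, indexed by
  the (symmetric) entourages; c E = {} for non-entourages.\<close>
definition gpath :: "('a \<times> 'a) set set \<Rightarrow> 'a \<Rightarrow> 'a \<Rightarrow> (('a \<times> 'a) set \<Rightarrow> 'a list set) \<Rightarrow> bool" where
  "gpath U x y c \<longleftrightarrow> (\<forall>E. E \<notin> SE U \<longrightarrow> c E = {})
     \<and> (\<forall>E\<in>SE U. \<exists>p. edgepath E p \<and> hd p = x \<and> last p = y \<and> c E = epclass E p)
     \<and> (\<forall>E\<in>SE U. \<forall>F\<in>SE U. F \<subseteq> E \<longrightarrow> c F \<subseteq> c E)"

definition gpath_from :: "'a set \<Rightarrow> ('a \<times> 'a) set set \<Rightarrow> 'a \<Rightarrow> (('a \<times> 'a) set \<Rightarrow> 'a list set) \<Rightarrow> bool" where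
  "gpath_from X U x c \<longleftrightarrow> (\<exists>y\<in>X. gpath U x y c)"

definition gp_short :: "('a \<times> 'a) set \<Rightarrow> 'a \<Rightarrow> 'a \<Rightarrow> (('a \<times> 'a) set \<Rightarrow> 'a list set) \<Rightarrow> bool" where
  "gp_short F x y c \<longleftrightarrow> (x, y) \<in> F \<and> [x, y] \<in> c F"

definition gp_htp :: "('a \<times> 'a) set \<Rightarrow> (('a \<times> 'a) set \<Rightarrow> 'a list set) \<Rightarrow> (('a \<times> 'a) set \<Rightarrow> 'a list set) \<Rightarrow> bool" where
  "gp_htp F c d \<longleftrightarrow> (\<exists>p\<in>c F. \<exists>q\<in>d F. ehtp F p q)"

definition uniformly_joinable :: "'a set \<Rightarrow> ('a \<times> 'a) set set \<Rightarrow> bool" where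
  "uniformly_joinable X U \<longleftrightarrow> (\<forall>E\<in>SE U. \<exists>F\<in>SE U. \<forall>(x, y)\<in>F.
     \<exists>c. gpath U x y c \<and> gp_short E x y c)"

definition GP :: "'a set \<Rightarrow> ('a \<times> 'a) set set \<Rightarrow> 'a \<Rightarrow> (('a \<times> 'a) set \<Rightarrow> 'a list set) set" where
  "GP X U x0 = {c. gpath_from X U x0 c}"

definition GP_unif :: "'a set \<Rightarrow> ('a \<times> 'a) set set \<Rightarrow> 'a \<Rightarrow>
    ((('a \<times> 'a) set \<Rightarrow> 'a list set) \<times> (('a \<times> 'a) set \<Rightarrow> 'a list set)) set set" where
  "GP_unif X U x0 = {W. W \<subseteq> GP X U x0 \<times> GP X U x0 \<and>
     (\<exists>F\<in>SE U. {(c, d). c \<in> GP X U x0 \<and> d \<in> GP X U x0 \<and> gp_htp F c d} \<subseteq> W)}"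

definition fpre :: "('a \<Rightarrow> 'b) \<Rightarrow> 'a set \<Rightarrow> ('b \<times> 'b) set \<Rightarrow> ('a \<times> 'a) set" where
  "fpre f X F = {(x, y). x \<in> X \<and> y \<in> X \<and> (f x, f y) \<in> F}"

definition ftilde :: "('a \<Rightarrow> 'b) \<Rightarrow> 'a set \<Rightarrow> ('b \<times> 'b) set set \<Rightarrow>
    (('a \<times> 'a) set \<Rightarrow> 'a list set) \<Rightarrow> (('b \<times> 'b) set \<Rightarrow> 'b list set)" where
  "ftilde f X V c = (\<lambda>F. if F \<in> SE V then {q. \<exists>p\<in>c (fpre f X F). ephtp F (map f p) q} else {})"

definition GP1 :: "('a \<Rightarrow> 'b) \<Rightarrow> 'a set \<Rightarrow> ('a \<times> 'a) set set \<Rightarrow> 'b set \<Rightarrow> ('b \<times> 'b) set set \<Rightarrow> bool" where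
  "GP1 f X U Y V \<longleftrightarrow> (\<forall>x0\<in>X. \<forall>c. gpath_from Y V (f x0) c \<longrightarrow>
     (\<exists>d. gpath_from X U x0 d \<and> ftilde f X V d = c))"

definition GP2 :: "('a \<Rightarrow> 'b) \<Rightarrow> 'a set \<Rightarrow> ('a \<times> 'a) set set \<Rightarrow> 'b set \<Rightarrow> ('b \<times> 'b) set set \<Rightarrow> bool" where
  "GP2 f X U Y V \<longleftrightarrow> (\<forall>E\<in>SE U. \<exists>F\<in>SE U. \<forall>x0\<in>X. \<forall>\<alpha> \<beta>.
     gpath_from X U x0 \<alpha> \<and> gpath_from X U x0 \<beta>
     \<and> gp_htp (pimage f F) (ftilde f X V \<alpha>) (ftilde f X V \<beta>) \<longrightarrow> gp_htp E \<alpha> \<beta>)"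

definition C1 :: "('a \<Rightarrow> 'b) \<Rightarrow> 'a set \<Rightarrow> ('a \<times> 'a) set set \<Rightarrow> 'b set \<Rightarrow> bool" where
  "C1 f X U Y \<longleftrightarrow> (\<forall>E\<in>SE U. \<exists>F\<in>SE U. \<forall>x0\<in>X. \<forall>\<beta>.
     echain Y (pimage f F) \<beta> \<and> hd \<beta> = f x0 \<longrightarrow>
     (\<exists>\<alpha>. echain X E \<alpha> \<and> hd \<alpha> = x0 \<and> map f \<alpha> = \<beta>))"

definition C2 :: "('a \<Rightarrow> 'b) \<Rightarrow> 'a set \<Rightarrow> ('a \<times> 'a) set set \<Rightarrow> bool" where
  "C2 f X U \<longleftrightarrow> (\<forall>E\<in>SE U. \<exists>F\<in>SE U. \<forall>\<alpha> \<beta>.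
     echain X F \<alpha> \<and> echain X F \<beta> \<and> hd \<alpha> = hd \<beta>
     \<and> ehtp (pimage f F) (map f \<alpha>) (map f \<beta>) \<longrightarrow> ehtp E \<alpha> \<beta>)"

definition gen_uniform_covering :: "('a \<Rightarrow> 'b) \<Rightarrow> 'a set \<Rightarrow> ('a \<times> 'a) set set \<Rightarrow> 'b set \<Rightarrow> ('b \<times> 'b) set set \<Rightarrow> bool" where
  "gen_uniform_covering f X U Y V \<longleftrightarrow> generates_unif f X U Y V
     \<and> GP1 f X U Y V \<and> GP2 f X U Y V \<and> C1 f X U Y \<and> C2 f X U"

end

theory Submission
  imports Defs
begin

lemma rips2: "rips_simplex E {x,y} \<longleftrightarrow> (x,x)\<in>E \<and> (x,y)\<in>E \<and> (y,x)\<in>E \<and> (y,y)\<in>E"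
  by (auto simp: rips_simplex_def)
lemma rips1: "rips_simplex E {x} \<longleftrightarrow> (x,x)\<in>E"
  by (auto simp: rips_simplex_def)
lemma rips3: "rips_simplex E {x,y,z} \<longleftrightarrow> {x,y,z}\<times>{x,y,z} \<subseteq> E"
  by (auto simp: rips_simplex_def)

lemma ep_Nil[simp]: "\<not> edgepath E []" by (simp add: edgepath_def)
lemma ep_single[simp]: "edgepath E [x] \<longleftrightarrow> (x,x)\<in>E"
  by (simp add: edgepath_def rips1)
lemma ep_Cons2[simp]: "edgepath E (x#y#p) \<longleftrightarrow> (x,x)\<in>E \<and> (x,y)\<in>E \<and> (y,x)\<in>E \<and> edgepath E (y#p)"
proof -
  have A: "(\<forall>i. Suc i < length (x#y#p) \<longrightarrow> rips_simplex E {(x#y#p) ! i, (x#y#p) ! Suc i})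
     \<longleftrightarrow> rips_simplex E {x,y} \<and> (\<forall>i. Suc i < length (y#p) \<longrightarrow> rips_simplex E {(y#p) ! i, (y#p) ! Suc i})"
    (is "?L \<longleftrightarrow> ?R")
  proof
    assume L: ?L
    have "rips_simplex E {x,y}" using L[rule_format, of 0] by simp
    moreover have "\<forall>i. Suc i < length (y#p) \<longrightarrow> rips_simplex E {(y#p) ! i, (y#p) ! Suc i}"
    proof (intro allI impI)
      fix i assume "Suc i < length (y#p)"
      then show "rips_simplex E {(y#p) ! i, (y#p) ! Suc i}" using L[rule_format, of "Suc i"] by simp
    qed
    ultimately show ?R by blast
  next
    assume R: ?R
    show ?L
    proof (intro allI impI)
      fix i assume "Suc i < length (x#y#p)"
      then show "rips_simplex E {(x#y#p) ! i, (x#y#p) ! Suc i}"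
        using R by (cases i) auto
    qed
  qed
  show ?thesis unfolding edgepath_def A by (auto simp: rips1 rips2)
qed

lemma ep_Cons_imp: "edgepath E (x#p) \<Longrightarrow> p \<noteq> [] \<Longrightarrow> edgepath E p"
  by (cases p) auto

lemma ep_append: "a \<noteq> [] \<Longrightarrow> b \<noteq> [] \<Longrightarrow> edgepath E (a@b) \<longleftrightarrow>
   edgepath E a \<and> edgepath E b \<and> (last a, hd b)\<in>E \<and> (hd b, last a)\<in>E"
proof (induction a)
  case Nil then show ?case by simp
next
  case (Cons x a)
  show ?case
  proof (cases a)
    case Nil then show ?thesis using Cons by (cases b) auto
  next
    case (Cons y a') then show ?thesis using Cons.IH Cons.prems by auto
  qed
qed

lemma ep_diag: "edgepath E p \<Longrightarrow> x \<in> set p \<Longrightarrow> (x,x)\<in>E"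
  by (auto simp: edgepath_def rips1)

lemma ep_rev: "edgepath E p \<Longrightarrow> edgepath E (rev p)"
proof (induction p rule: induct_list012)
  case (3 x y zs)
  then have a: "edgepath E (rev zs @ [y])" by simp
  have "edgepath E ((rev zs @ [y]) @ [x])"
    by (subst ep_append) (use a 3 in auto)
  then show ?case by simp
qed auto

lemma epstep_hd_last: "epstep E p q \<Longrightarrow> hd p = hd q \<and> last p = last q"
  unfolding epstep_def
  by (auto simp: hd_append last_append)

lemma ephtp_refl: "edgepath E p \<Longrightarrow> ephtp E p p"
  by (simp add: ephtp_def)

lemma ephtp_ep: "ephtp E p q \<Longrightarrow> edgepath E p \<and> edgepath E q"
  by (simp add: ephtp_def)

lemma ephtp_sym: "ephtp E p q \<Longrightarrow> ephtp E q p"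
proof -
  assume h: "ephtp E p q"
  then have "(q,p) \<in> ((epstepR E \<union> (epstepR E)\<inverse>)\<inverse>)\<^sup>*"
    unfolding ephtp_def by (simp add: rtrancl_converseI)
  then show ?thesis using h unfolding ephtp_def by (simp add: converse_Un Un_commute)
qed

lemma ephtp_trans: "ephtp E p q \<Longrightarrow> ephtp E q r \<Longrightarrow> ephtp E p r"
  unfolding ephtp_def by auto

lemma ephtp_step: "edgepath E p \<Longrightarrow> edgepath E q \<Longrightarrow> epstep E p q \<Longrightarrow> ephtp E p q"
  unfolding ephtp_def epstepR_def by auto

lemma ephtp_hd_last: "ephtp E p q \<Longrightarrow> hd p = hd q \<and> last p = last q"
proof -
  assume "ephtp E p q"
  then have "(p,q) \<in> (epstepR E \<union> (epstepR E)\<inverse>)\<^sup>*" by (simp add: ephtp_def)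
  then show ?thesis
    by (induction rule: rtrancl_induct) (auto simp: epstepR_def dest: epstep_hd_last)
qed

lemma htp_lift:
  assumes inv: "\<And>p q. P p \<Longrightarrow> edgepath E p \<Longrightarrow> edgepath E q \<Longrightarrow> epstep E p q \<or> epstep E q p \<Longrightarrow> P q"
    and ep: "\<And>p. P p \<Longrightarrow> edgepath E p \<Longrightarrow> edgepath E' (\<phi> p)"
    and st: "\<And>p q. P p \<Longrightarrow> P q \<Longrightarrow> edgepath E p \<Longrightarrow> edgepath E q \<Longrightarrow> epstep E p q \<Longrightarrow> ephtp E' (\<phi> p) (\<phi> q)"
    and h: "ephtp E p q" and P: "P p"
  shows "ephtp E' (\<phi> p) (\<phi> q)"
proof -
  from h have r: "(p,q) \<in> (epstepR E \<union> (epstepR E)\<inverse>)\<^sup>*" and e: "edgepath E p" by (auto simp: ephtp_def)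
  from r have "P q \<and> ephtp E' (\<phi> p) (\<phi> q)"
  proof (induction rule: rtrancl_induct)
    case base then show ?case using P ep e ephtp_refl by blast
  next
    case (step y z)
    from step.hyps(2) show ?case
    proof
      assume "(y,z) \<in> epstepR E"
      then have a: "edgepath E y" "edgepath E z" "epstep E y z" by (auto simp: epstepR_def)
      then have "P z" using inv step.IH by blast
      then show ?thesis using st[OF _ _ a] step.IH ephtp_trans by blast
    next
      assume "(y,z) \<in> (epstepR E)\<inverse>"
      then have a: "edgepath E z" "edgepath E y" "epstep E z y" by (auto simp: epstepR_def)
      then have "P z" using inv step.IH by blast
      then show ?thesis using st[OF _ _ a] step.IH ephtp_trans ephtp_sym by blast
    qed
  qed
  then show ?thesis by blast
qed

lemma epstep_mono: assumes "E \<subseteq> E'" "epstep E p q" shows "epstep E' p q"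
  using assms(2) unfolding epstep_def
proof (elim disjE exE conjE)
  fix a b x y z assume h: "p = a @ [x, y, z] @ b" "q = a @ [x, z] @ b" "rips_simplex E {x, y, z}"
  then have "rips_simplex E' {x, y, z}" using assms(1) unfolding rips_simplex_def by auto
  then show "(\<exists>a b x. p = a @ [x, x] @ b \<and> q = a @ [x] @ b) \<or>
    (\<exists>a b x y z. p = a @ [x, y, z] @ b \<and> q = a @ [x, z] @ b \<and> rips_simplex E' {x, y, z})"
    using h by blast
qed blast

lemma ep_mono: "E \<subseteq> E' \<Longrightarrow> edgepath E p \<Longrightarrow> edgepath E' p"
  unfolding edgepath_def rips_simplex_def by blast

lemma ephtp_mono: assumes "E \<subseteq> E'" "ephtp E p q" shows "ephtp E' p q"
proof -
  have "ephtp E' (id p) (id q)"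
    by (rule htp_lift[where P="\<lambda>_. True"]) (use assms in \<open>auto intro: ephtp_step ep_mono epstep_mono\<close>)
  then show ?thesis by simp
qed

lemma ep_map: "(\<forall>(a,b)\<in>E. (f a, f b) \<in> F) \<Longrightarrow> edgepath E p \<Longrightarrow> edgepath F (map f p)"
  by (induction p rule: induct_list012) auto

lemma epstep_map: assumes "\<forall>(a,b)\<in>E. (f a, f b) \<in> F" "epstep E p q" shows "epstep F (map f p) (map f q)"
  using assms(2) unfolding epstep_def
proof (elim disjE exE conjE)
  fix a b x assume "p = a @ [x, x] @ b" "q = a @ [x] @ b"
  then show "(\<exists>a b x. map f p = a @ [x, x] @ b \<and> map f q = a @ [x] @ b) \<or>
    (\<exists>a b x y z. map f p = a @ [x, y, z] @ b \<and> map f q = a @ [x, z] @ b \<and> rips_simplex F {x, y, z})"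
    by (intro disjI1 exI[of _ "map f a"] exI[of _ "map f b"] exI[of _ "f x"]) simp
next
  fix a b x y z assume h: "p = a @ [x, y, z] @ b" "q = a @ [x, z] @ b" "rips_simplex E {x, y, z}"
  have "rips_simplex F {f x, f y, f z}" using h(3) assms(1) unfolding rips3 by blast
  then show "(\<exists>a b x. map f p = a @ [x, x] @ b \<and> map f q = a @ [x] @ b) \<or>
    (\<exists>a b x y z. map f p = a @ [x, y, z] @ b \<and> map f q = a @ [x, z] @ b \<and> rips_simplex F {x, y, z})"
    using h by (intro disjI2 exI[of _ "map f a"] exI[of _ "map f b"] exI[of _ "f x"] exI[of _ "f y"] exI[of _ "f z"]) simp
qed

lemma ephtp_map: assumes "\<forall>(a,b)\<in>E. (f a, f b) \<in> F" "ephtp E p q" shows "ephtp F (map f p) (map f q)"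
  by (rule htp_lift[where P="\<lambda>_. True"]) (use assms in \<open>auto intro: ephtp_step ep_map epstep_map\<close>)

lemma epstep_rev: assumes "epstep E p q" shows "epstep E (rev p) (rev q)"
  using assms unfolding epstep_def
proof (elim disjE exE conjE)
  fix a b x assume "p = a @ [x, x] @ b" "q = a @ [x] @ b"
  then show "(\<exists>a b x. rev p = a @ [x, x] @ b \<and> rev q = a @ [x] @ b) \<or>
    (\<exists>a b x y z. rev p = a @ [x, y, z] @ b \<and> rev q = a @ [x, z] @ b \<and> rips_simplex E {x, y, z})"
    by (intro disjI1 exI[of _ "rev b"] exI[of _ "rev a"] exI[of _ "x"]) simp
next
  fix a b x y z assume h: "p = a @ [x, y, z] @ b" "q = a @ [x, z] @ b" "rips_simplex E {x, y, z}"
  have "rips_simplex E {z, y, x}" using h(3) by (simp add: insert_commute)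
  then show "(\<exists>a b x. rev p = a @ [x, x] @ b \<and> rev q = a @ [x] @ b) \<or>
    (\<exists>a b x y z. rev p = a @ [x, y, z] @ b \<and> rev q = a @ [x, z] @ b \<and> rips_simplex E {x, y, z})"
    using h by (intro disjI2 exI[of _ "rev b"] exI[of _ "rev a"] exI[of _ "z"] exI[of _ "y"] exI[of _ "x"]) simp
qed

lemma ephtp_rev: assumes "ephtp E p q" shows "ephtp E (rev p) (rev q)"
  by (rule htp_lift[where P="\<lambda>_. True"]) (use assms in \<open>auto intro: ephtp_step ep_rev epstep_rev\<close>)

lemma ep_nonempty: "edgepath E p \<Longrightarrow> p \<noteq> []" by auto

lemma ep_suffix_swap: assumes "edgepath E (p@b)" "edgepath E q" "last q = last p" "p \<noteq> []" shows "edgepath E (q@b)"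
proof (cases "b = []")
  case True then show ?thesis using assms by simp
next
  case False
  have "p \<noteq> []" "q \<noteq> []" using assms(2,4) by auto
  then show ?thesis using assms False
    apply (subst ep_append) apply simp apply simp
    using ep_append[of p b E] False \<open>p \<noteq> []\<close> by auto
qed

lemma ep_prefix_swap: assumes "edgepath E (a@p)" "edgepath E q" "hd q = hd p" "p \<noteq> []" shows "edgepath E (a@q)"
proof (cases "a = []")
  case True then show ?thesis using assms by simp
next
  case False
  have "q \<noteq> []" using assms(2) by auto
  then show ?thesis using assms False
    apply (subst ep_append) apply simp apply simp
    using ep_append[of a p E] False \<open>p \<noteq> []\<close> by auto
qed

lemma ep_swap: assumes "edgepath E (a@p@b)" "edgepath E q" "hd q = hd p" "last q = last p" "p \<noteq> []"
  shows "edgepath E (a@q@b)"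
proof -
  have "edgepath E (a@q@b)"
  proof -
    have "edgepath E ((a@p)@b)" using assms(1) by simp
    moreover have "edgepath E (a@q)"
    proof (rule ep_prefix_swap[OF _ assms(2,3,5)])
      show "edgepath E (a@p)"
      proof (cases "b = []")
        case True then show ?thesis using assms(1) by simp
      next
        case False
        then show ?thesis using assms(1) ep_append[of "a@p" b E] assms(5) by auto
      qed
    qed
    moreover have "last (a@q) = last (a@p)" using assms(4,5) assms(2) by (auto simp: last_append)
    ultimately have "a@p \<noteq> [] \<Longrightarrow> edgepath E ((a@q)@b)" by (rule ep_suffix_swap)
    then have "edgepath E ((a@q)@b)" using assms(5) by simp
    then show ?thesis by simp
  qed
  then show ?thesis .
qed

lemma epstep_app: "epstep E p q \<Longrightarrow> epstep E (a@p@b) (a@q@b)"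
  unfolding epstep_def
  apply (elim disjE exE conjE)
   apply (rule disjI1)
   apply (rule_tac x="a@aa" in exI, rule_tac x="ba@b" in exI, rule_tac x="x" in exI, simp)
  apply (rule disjI2)
  apply (rule_tac x="a@aa" in exI, rule_tac x="ba@b" in exI, rule_tac x="x" in exI,
         rule_tac x="y" in exI, rule_tac x="z" in exI)
  apply simp
  done

lemma ephtp_app: assumes "edgepath E (a@p@b)" "ephtp E p q" shows "ephtp E (a@p@b) (a@q@b)"
proof -
  have pne: "p \<noteq> []" using assms(2) by (auto simp: ephtp_def)
  show ?thesis
  proof (rule htp_lift[where P="\<lambda>r. hd r = hd p \<and> last r = last p" and \<phi>="\<lambda>r. a@r@b"])
    fix r s assume "hd r = hd p \<and> last r = last p" "epstep E r s \<or> epstep E s r"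
    then show "hd s = hd p \<and> last s = last p" using epstep_hd_last by metis
  next
    fix r assume "hd r = hd p \<and> last r = last p" "edgepath E r"
    then show "edgepath E (a@r@b)" using ep_swap[OF assms(1)] pne by blast
  next
    fix r s assume h: "hd r = hd p \<and> last r = last p" "hd s = hd p \<and> last s = last p"
      "edgepath E r" "edgepath E s" "epstep E r s"
    show "ephtp E (a@r@b) (a@s@b)"
      using h ep_swap[OF assms(1)] pne by (intro ephtp_step epstep_app) auto
  qed (use assms in auto)
qed

lemma ep_stutter_iff: "edgepath E (a@[x,x]@b) \<longleftrightarrow> edgepath E (a@[x]@b)"
proof
  assume "edgepath E (a@[x,x]@b)"
  then show "edgepath E (a@[x]@b)" using ep_swap[of E a "[x,x]" b "[x]"] ep_diag[of E "a@[x,x]@b" x] by auto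
next
  assume h: "edgepath E (a@[x]@b)"
  then have "(x,x)\<in>E" using ep_diag by fastforce
  then show "edgepath E (a@[x,x]@b)" using ep_swap[OF h, of "[x,x]"] by auto
qed

lemma ephtp_stutter: assumes "edgepath E (a@[x]@b)" shows "ephtp E (a@[x,x]@b) (a@[x]@b)"
proof (rule ephtp_step)
  show "edgepath E (a@[x,x]@b)" using assms ep_stutter_iff[of E a x b] by blast
  show "epstep E (a @ [x, x] @ b) (a @ [x] @ b)" unfolding epstep_def by blast
qed (rule assms)

lemma cat_eq: "p \<noteq> [] \<Longrightarrow> q \<noteq> [] \<Longrightarrow> last p = hd q \<Longrightarrow> p @ tl q = butlast p @ q"
  by (metis append.assoc append_Cons append_Nil append_butlast_last_id list.collapse)

lemma ep_cat: assumes "edgepath E p" "edgepath E q" "last p = hd q" shows "edgepath E (p @ tl q)"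
proof (cases "tl q = []")
  case True then show ?thesis using assms by simp
next
  case False
  obtain y r where q: "q = y # r" using assms(2) by (cases q) auto
  then obtain z r' where r: "r = z # r'" using False by (cases r) auto
  show ?thesis using assms q r False by (subst ep_append) auto
qed

lemma hd_cat[simp]: "p \<noteq> [] \<Longrightarrow> hd (p @ tl q) = hd p" by simp
lemma last_cat: "p \<noteq> [] \<Longrightarrow> q \<noteq> [] \<Longrightarrow> last p = hd q \<Longrightarrow> last (p @ tl q) = last q"
  by (metis cat_eq last_appendR)

lemma ephtp_cat: assumes "ephtp E p p'" "ephtp E q q'" "last p = hd q"
  shows "ephtp E (p @ tl q) (p' @ tl q')"
proof -
  have e: "edgepath E p" "edgepath E q" "edgepath E p'" "edgepath E q'" using assms by (auto simp: ephtp_def)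
  have hl: "hd p = hd p'" "last p = last p'" "hd q = hd q'" "last q = last q'" using assms ephtp_hd_last by metis+
  have 1: "ephtp E ([] @ p @ tl q) ([] @ p' @ tl q)"
    by (rule ephtp_app) (use ep_cat[OF e(1,2) assms(3)] assms(1) in auto)
  have eq1: "p' @ tl q = butlast p' @ q" using e hl assms(3) by (intro cat_eq) auto
  have eq2: "p' @ tl q' = butlast p' @ q'" using e hl assms(3) by (intro cat_eq) auto
  have "edgepath E (p' @ tl q)" using 1 by (simp add: ephtp_def)
  then have 2: "ephtp E (butlast p' @ q @ []) (butlast p' @ q' @ [])"
    using eq1 assms(2) by (intro ephtp_app) auto
  show ?thesis using 1 2 eq1 eq2 ephtp_trans by fastforce
qed

lemma ephtp_cancel: "edgepath E p \<Longrightarrow> ephtp E (rev p @ tl p) [last p]"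
proof (induction p rule: induct_list012)
  case (2 x) then show ?case by (simp add: ephtp_refl)
next
  case (3 x y zs)
  have ez: "edgepath E (y#zs)" using 3 by simp
  have E1: "edgepath E (rev (y#zs) @ tl (y#zs))" using ep_cat[OF ep_rev[OF ez] ez] by simp
  have E0: "edgepath E (rev (x#y#zs) @ tl (x#y#zs))" using ep_cat[OF ep_rev[OF "3.prems"] "3.prems"] by simp
  have s1: "ephtp E (rev zs @ [y,x,y] @ zs) (rev zs @ [y,y] @ zs)"
  proof (rule ephtp_step)
    show "edgepath E (rev zs @ [y,x,y] @ zs)" using E0 by simp
    show "edgepath E (rev zs @ [y,y] @ zs)" using E1 ep_stutter_iff[of E "rev zs" y zs] by simp
    show "epstep E (rev zs @ [y,x,y] @ zs) (rev zs @ [y,y] @ zs)"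
    proof -
      have yy: "(y,y)\<in>E" using ez ep_diag by fastforce
      show ?thesis unfolding epstep_def rips3
        apply (rule disjI2)
        apply (rule exI[of _ "rev zs"], rule exI[of _ zs], rule exI[of _ y], rule exI[of _ x], rule exI[of _ y])
        using yy "3.prems" by auto
    qed
  qed
  have s2: "ephtp E (rev zs @ [y,y] @ zs) (rev zs @ [y] @ zs)"
    using E1 by (intro ephtp_stutter) simp
  have "ephtp E (rev zs @ [y] @ zs) [last (y#zs)]" using "3.IH"(2)[OF ez] by simp
  then have "ephtp E (rev zs @ [y,x,y] @ zs) [last (y#zs)]" by (rule ephtp_trans[OF s1 ephtp_trans[OF s2]])
  then show ?case by simp
qed simp

lemma ehtp_ep: "ehtp E p q \<Longrightarrow> edgepath E p \<and> edgepath E ([hd p] @ q @ [last p])"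
  unfolding ehtp_def ephtp_def by auto

lemma ehtp_ep2: assumes "ehtp E p q" "q \<noteq> []" shows "edgepath E q"
proof -
  have "edgepath E ([hd p] @ q @ [last p])" using ehtp_ep[OF assms(1)] by blast
  moreover have "q \<noteq> []" using assms(2) .
  ultimately show ?thesis
    using ep_append[of "[hd p]" "q @ [last p]" E] ep_append[of q "[last p]" E] by auto
qed

lemma ephtp_front: "edgepath E p \<Longrightarrow> ephtp E ([hd p] @ p) p"
proof -
  assume e: "edgepath E p"
  then obtain h t where p: "p = h # t" by (cases p) auto
  have "ephtp E ([] @ [h,h] @ t) ([] @ [h] @ t)" using e p by (intro ephtp_stutter) simp
  then show ?thesis using p by simp
qed

lemma ephtp_back: "edgepath E p \<Longrightarrow> ephtp E (p @ [last p]) p"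
proof -
  assume e: "edgepath E p"
  then have "p \<noteq> []" by auto
  then have p: "p = butlast p @ [last p]" by simp
  have "ephtp E (butlast p @ [last p, last p] @ []) (butlast p @ [last p] @ [])"
    using e p by (intro ephtp_stutter) (metis append_Nil2 append_eq_appendI)
  then show ?thesis using p by (metis append_Cons append_Nil append_assoc self_append_conv)
qed

lemma ehtp_refl: assumes "edgepath E p" shows "ehtp E p p"
proof -
  have ne: "p \<noteq> []" using assms by auto
  have d: "(hd p, hd p) \<in> E" "(last p, last p) \<in> E"
    using ep_diag[OF assms, of "hd p"] ep_diag[OF assms, of "last p"] ne by auto
  have e2: "edgepath E (p @ [last p])" using assms d ne by (subst ep_append) auto
  have 1: "ephtp E ([hd p] @ (p @ [last p])) (p @ [last p])" using ephtp_front[OF e2] ne by simp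
  have 2: "ephtp E (p @ [last p]) p" by (rule ephtp_back[OF assms])
  show ?thesis unfolding ehtp_def using d ephtp_sym[OF ephtp_trans[OF 1 2]] by simp
qed

lemma ehtp_cong: assumes "ehtp E p q" "ephtp E p p'" "ephtp E q q'" shows "ehtp E p' q'"
proof -
  have hl: "hd p = hd p'" "last p = last p'" "hd q = hd q'" "last q = last q'"
    using assms(2,3) ephtp_hd_last by metis+
  have 1: "ephtp E p' ([hd p] @ q @ [last p])"
    using assms(1,2) unfolding ehtp_def by (meson ephtp_sym ephtp_trans)
  have 2: "ephtp E ([hd p] @ q @ [last p]) ([hd p] @ q' @ [last p])"
    using assms(1,3) by (intro ephtp_app) (auto simp: ehtp_def ephtp_def)
  show ?thesis using assms(1) hl ephtp_trans[OF 1 2] unfolding ehtp_def by simp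
qed

lemma ehtp_mono: "E \<subseteq> E' \<Longrightarrow> ehtp E p q \<Longrightarrow> ehtp E' p q"
  unfolding ehtp_def using ephtp_mono by blast

lemma ehtp_map: assumes "\<forall>(a,b)\<in>E. (f a, f b) \<in> F" "ehtp E p q" "q \<noteq> []" shows "ehtp F (map f p) (map f q)"
proof -
  have ne: "p \<noteq> []" "q \<noteq> []" using ehtp_ep[OF assms(2)] assms(3) by auto
  have "ephtp F (map f p) (map f ([hd p] @ q @ [last p]))"
    using assms unfolding ehtp_def by (intro ephtp_map) auto
  moreover have "hd (map f p) = f (hd p)" "last (map f p) = f (last p)"
    "hd (map f q) = f (hd q)" "last (map f q) = f (last q)" using ne by (auto simp: hd_map last_map)
  ultimately show ?thesis using assms unfolding ehtp_def by auto
qed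

lemma ehtp_prefix: assumes "ehtp E b b'" "hd b = hd b'" "edgepath E g" "last g = hd b" "b' \<noteq> []"
  shows "ehtp E (g @ tl b) (g @ tl b')"
proof -
  let ?y = "hd b" and ?z = "last b"
  have eb: "edgepath E b" "edgepath E b'" using assms(1,5) ehtp_ep ehtp_ep2 by blast+
  have neb: "b \<noteq> []" "b' \<noteq> []" "g \<noteq> []" using eb assms(3) by auto
  have h1: "ephtp E b ([?y] @ b' @ [?z])" using assms(1) by (simp add: ehtp_def)
  have ebz: "edgepath E ([?y] @ (b' @ [?z]))" using h1 by (simp add: ephtp_def)
  have ebz2: "edgepath E (b' @ [?z])"
    using ebz ep_append[of "[?y]" "b' @ [?z]" E] by simp
  have A: "ephtp E (g @ tl b) (g @ tl ([?y] @ b' @ [?z]))"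
    using assms by (intro ephtp_cat ephtp_refl h1) auto
  have B: "ephtp E (g @ tl ([?y] @ (b' @ [?z]))) (g @ tl (b' @ [?z]))"
  proof (rule ephtp_cat[OF ephtp_refl[OF assms(3)]])
    show "ephtp E ([?y] @ b' @ [?z]) (b' @ [?z])"
      using ephtp_front[OF ebz2] assms(2) neb by simp
  qed (use assms in simp)
  have eg1: "edgepath E ([hd g] @ g)" using ephtp_front[OF assms(3)] by (simp add: ephtp_def)
  have C: "ephtp E (([hd g] @ g) @ tl (b' @ [?z])) (g @ tl (b' @ [?z]))"
    using assms neb by (intro ephtp_cat ephtp_front ephtp_refl ebz2) auto
  have eq: "([hd g] @ g) @ tl (b' @ [?z]) = [hd (g @ tl b)] @ (g @ tl b') @ [last (g @ tl b)]"
    using neb assms last_cat[of g b] by (cases b') auto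
  have D: "ephtp E (g @ tl b) ([hd (g @ tl b)] @ (g @ tl b') @ [last (g @ tl b)])"
    using ephtp_trans[OF A ephtp_trans[OF B ephtp_sym[OF C]]] eq by simp
  have "last (g @ tl b) = last b" "last (g @ tl b') = last b'"
    using last_cat[OF neb(3) neb(1) assms(4)] last_cat[OF neb(3) neb(2)] assms(2,4) by auto
  moreover have "(hd g, hd g) \<in> E" using ep_diag[OF assms(3), of "hd g"] neb by auto
  moreover have "(last b, last b') \<in> E" using assms(1) by (simp add: ehtp_def)
  ultimately show ?thesis using D neb unfolding ehtp_def by simp
qed

lemma ehtp_cancel: assumes "ehtp E (g @ tl a) (g @ tl b)" "edgepath E g" "edgepath E a" "edgepath E b"
   "hd a = last g" "hd b = last g"
  shows "ehtp E a b"
proof -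
  have ne: "g \<noteq> []" "a \<noteq> []" "b \<noteq> []" using assms by auto
  have 1: "ehtp E (rev g @ tl (g @ tl a)) (rev g @ tl (g @ tl b))"
  proof (rule ehtp_prefix[OF assms(1) _ ep_rev[OF assms(2)]])
    show "hd (g @ tl a) = hd (g @ tl b)" using ne by simp
    show "last (rev g) = hd (g @ tl a)" using ne by (simp add: last_rev)
    show "g @ tl b \<noteq> []" using ne by simp
  qed
  have c: "ephtp E (rev g @ tl g) [last g]" by (rule ephtp_cancel[OF assms(2)])
  have "last (rev g @ tl g) = last g" using ephtp_hd_last[OF c] by simp
  then have 2: "\<And>a. edgepath E a \<Longrightarrow> hd a = last g \<Longrightarrow> ephtp E ((rev g @ tl g) @ tl a) ([last g] @ tl a)"
    using c by (intro ephtp_cat ephtp_refl) auto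
  have 3: "\<And>a. a \<noteq> [] \<Longrightarrow> hd a = last g \<Longrightarrow> [last g] @ tl a = a" by (metis append_Cons append_Nil list.collapse)
  have X: "ephtp E (rev g @ tl (g @ tl a)) a" using 2[OF assms(3,5)] 3[OF ne(2) assms(5)] ne by simp
  have Y: "ephtp E (rev g @ tl (g @ tl b)) b" using 2[OF assms(4,6)] 3[OF ne(3) assms(6)] ne by simp
  show ?thesis by (rule ehtp_cong[OF 1 X Y])
qed

section \<open>Uniformities\<close>

lemma unif_D0: assumes "uniformity X U" shows "U \<noteq> {}"
  using assms unfolding uniformity_def by (elim conjE) assumption

lemma unif_D1: assumes "uniformity X U" shows "\<forall>E\<in>U. Id_on X \<subseteq> E \<and> E \<subseteq> X \<times> X"
  using assms unfolding uniformity_def by (elim conjE) assumption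

lemma unif_D2: assumes "uniformity X U" shows "\<forall>E\<in>U. \<forall>F. E \<subseteq> F \<and> F \<subseteq> X \<times> X \<longrightarrow> F \<in> U"
  using assms unfolding uniformity_def by (elim conjE) assumption

lemma unif_D3: assumes "uniformity X U" shows "\<forall>E\<in>U. \<forall>F\<in>U. E \<inter> F \<in> U"
  using assms unfolding uniformity_def by (elim conjE) assumption

lemma unif_D4: assumes "uniformity X U" shows "\<forall>E\<in>U. E\<inverse> \<in> U"
  using assms unfolding uniformity_def by (elim conjE) assumption

lemma unif_sub: "uniformity X U \<Longrightarrow> E \<in> U \<Longrightarrow> E \<subseteq> X \<times> X \<and> Id_on X \<subseteq> E"
  using unif_D1 by blast

lemma unif_up: "uniformity X U \<Longrightarrow> E \<in> U \<Longrightarrow> E \<subseteq> F \<Longrightarrow> F \<subseteq> X \<times> X \<Longrightarrow> F \<in> U"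
  using unif_D2 by blast

lemma unif_int: "uniformity X U \<Longrightarrow> E \<in> U \<Longrightarrow> F \<in> U \<Longrightarrow> E \<inter> F \<in> U"
  using unif_D3 by blast

lemma unif_conv: "uniformity X U \<Longrightarrow> E \<in> U \<Longrightarrow> E\<inverse> \<in> U"
  using unif_D4 by blast

lemma SE_int: "uniformity X U \<Longrightarrow> E \<in> SE U \<Longrightarrow> F \<in> SE U \<Longrightarrow> E \<inter> F \<in> SE U"
  unfolding SE_def using unif_int by (auto simp: sym_def)

lemma SE_symm: assumes "uniformity X U" "E \<in> U" shows "E \<inter> E\<inverse> \<in> SE U"
proof -
  have "E \<inter> E\<inverse> \<in> U" using assms unif_int unif_conv by blast
  moreover have "sym (E \<inter> E\<inverse>)" by (auto simp: sym_def)
  ultimately show ?thesis by (simp add: SE_def)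
qed

lemma SE_full: "uniformity X U \<Longrightarrow> X \<times> X \<in> SE U"
proof -
  assume u: "uniformity X U"
  then obtain E where E: "E \<in> U" using unif_D0 by blast
  then have "X \<times> X \<in> U" using unif_up[OF u E] unif_sub[OF u E] by blast
  then show ?thesis unfolding SE_def by (auto simp: sym_def)
qed

lemma SE_diag: "uniformity X U \<Longrightarrow> E \<in> SE U \<Longrightarrow> x \<in> X \<Longrightarrow> (x,x) \<in> E"
  unfolding SE_def using unif_sub by blast

lemma SE_sub: "uniformity X U \<Longrightarrow> E \<in> SE U \<Longrightarrow> E \<subseteq> X \<times> X"
  unfolding SE_def using unif_sub by blast

lemma SE_sym: "E \<in> SE U \<Longrightarrow> (x,y) \<in> E \<Longrightarrow> (y,x) \<in> E"
  unfolding SE_def sym_def by blast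

lemma SE_U: "E \<in> SE U \<Longrightarrow> E \<in> U"
  unfolding SE_def by blast

section \<open>Generalized paths\<close>

lemma epclass_eq: "ephtp E p q \<Longrightarrow> epclass E p = epclass E q"
  unfolding epclass_def by (rule Collect_cong) (meson ephtp_sym ephtp_trans)

lemma epclass_self: "edgepath E p \<Longrightarrow> p \<in> epclass E p"
  unfolding epclass_def by (simp add: ephtp_refl)

lemma gp_rep: "gpath U x y c \<Longrightarrow> E \<in> SE U \<Longrightarrow> \<exists>p. p \<in> c E \<and> edgepath E p \<and> hd p = x \<and> last p = y"
  unfolding gpath_def using epclass_self by metis

lemma gp_mem: assumes "gpath U x y c" "E \<in> SE U" "p \<in> c E"
  shows "edgepath E p \<and> hd p = x \<and> last p = y \<and> c E = epclass E p"
proof -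
  obtain p0 where p0: "edgepath E p0" "hd p0 = x" "last p0 = y" "c E = epclass E p0"
    using assms unfolding gpath_def by blast
  then have "ephtp E p0 p" using assms(3) by (simp add: epclass_def)
  then show ?thesis using p0 epclass_eq ephtp_hd_last ephtp_ep by metis
qed

lemma gp_mem_iff: assumes "gpath U x y c" "E \<in> SE U" "p \<in> c E"
  shows "q \<in> c E \<longleftrightarrow> ephtp E p q"
  using gp_mem[OF assms] by (simp add: epclass_def)

lemma gp_mono: "gpath U x y c \<Longrightarrow> E \<in> SE U \<Longrightarrow> F \<in> SE U \<Longrightarrow> F \<subseteq> E \<Longrightarrow> p \<in> c F \<Longrightarrow> p \<in> c E"
  unfolding gpath_def by blast

lemma gp_ext: assumes "gpath U x y c" "gpath U x' y' d" "\<And>E. E \<in> SE U \<Longrightarrow> \<exists>p. p \<in> c E \<and> p \<in> d E"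
  shows "c = d"
proof
  fix E show "c E = d E"
  proof (cases "E \<in> SE U")
    case True
    then obtain p where "p \<in> c E" "p \<in> d E" using assms(3) by blast
    then show ?thesis using gp_mem[OF assms(1) True] gp_mem[OF assms(2) True] by metis
  next
    case False then show ?thesis using assms unfolding gpath_def by simp
  qed
qed

lemma gp_pts: assumes "uniformity X U" "gpath U x y c" shows "x \<in> X \<and> y \<in> X"
proof -
  obtain p where p: "p \<in> c (X \<times> X)" "edgepath (X\<times>X) p" "hd p = x" "last p = y"
    using gp_rep[OF assms(2) SE_full[OF assms(1)]] by blast
  then have "p \<noteq> []" by auto
  then show ?thesis using p ep_diag[OF p(2), of x] ep_diag[OF p(2), of y] by auto
qed

lemma gp_end_unique: assumes "uniformity X U" "gpath U x y c" "gpath U x' y' c" shows "x = x' \<and> y = y'"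
proof -
  obtain p where "p \<in> c (X \<times> X)" "hd p = x" "last p = y"
    using gp_rep[OF assms(2) SE_full[OF assms(1)]] by blast
  then show ?thesis using gp_mem[OF assms(3) SE_full[OF assms(1)]] by metis
qed

definition gconst :: "('a \<times> 'a) set set \<Rightarrow> 'a \<Rightarrow> ('a \<times> 'a) set \<Rightarrow> 'a list set" where
  "gconst U x = (\<lambda>E. if E \<in> SE U then epclass E [x] else {})"

definition gcat :: "('a \<times> 'a) set set \<Rightarrow> (('a \<times> 'a) set \<Rightarrow> 'a list set) \<Rightarrow> (('a \<times> 'a) set \<Rightarrow> 'a list set)
   \<Rightarrow> ('a \<times> 'a) set \<Rightarrow> 'a list set" where
  "gcat U c d = (\<lambda>E. if E \<in> SE U then {r. \<exists>p\<in>c E. \<exists>q\<in>d E. ephtp E (p @ tl q) r} else {})"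

definition grev :: "('a \<times> 'a) set set \<Rightarrow> (('a \<times> 'a) set \<Rightarrow> 'a list set) \<Rightarrow> ('a \<times> 'a) set \<Rightarrow> 'a list set" where
  "grev U c = (\<lambda>E. if E \<in> SE U then {r. \<exists>p\<in>c E. ephtp E (rev p) r} else {})"

lemma gconst_gpath: assumes "uniformity X U" "x \<in> X" shows "gpath U x x (gconst U x)"
  unfolding gpath_def gconst_def
proof (intro conjI ballI allI impI)
  fix E assume "E \<in> SE U"
  then have "edgepath E [x]" using SE_diag[OF assms(1) _ assms(2)] by simp
  then show "\<exists>p. edgepath E p \<and> hd p = x \<and> last p = x \<and>
      (if E \<in> SE U then epclass E [x] else {}) = epclass E p" using \<open>E \<in> SE U\<close>
    by (intro exI[of _ "[x]"]) simp
next
  fix E F assume "E \<in> SE U" "F \<in> SE U" "F \<subseteq> E"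
  then show "(if F \<in> SE U then epclass F [x] else {}) \<subseteq> (if E \<in> SE U then epclass E [x] else {})"
    by (auto simp: epclass_def intro: ephtp_mono)
qed simp

lemma gconst_mem: "uniformity X U \<Longrightarrow> x \<in> X \<Longrightarrow> E \<in> SE U \<Longrightarrow> [x] \<in> gconst U x E"
proof -
  assume a: "uniformity X U" "x \<in> X" "E \<in> SE U"
  then have "edgepath E [x]" using SE_diag by fastforce
  then have "[x] \<in> epclass E [x]" by (rule epclass_self)
  then show ?thesis using a(3) unfolding gconst_def by simp
qed

lemma gcat_eq: assumes "gpath U x y c" "gpath U y z d" "E \<in> SE U" "p \<in> c E" "q \<in> d E"
  shows "gcat U c d E = epclass E (p @ tl q)"
proof -
  have mp: "edgepath E p" "hd p = x" "last p = y" and mq: "edgepath E q" "hd q = y" "last q = z"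
    using gp_mem[OF assms(1,3,4)] gp_mem[OF assms(2,3,5)] by auto
  show ?thesis
  proof (rule set_eqI)
    fix r show "r \<in> gcat U c d E \<longleftrightarrow> r \<in> epclass E (p @ tl q)"
    proof
      assume "r \<in> gcat U c d E"
      then obtain p' q' where h: "p' \<in> c E" "q' \<in> d E" "ephtp E (p' @ tl q') r"
        using assms(3) by (auto simp: gcat_def)
      have "ephtp E p' p" using gp_mem_iff[OF assms(1,3) h(1)] assms(4) by blast
      moreover have "ephtp E q' q" using gp_mem_iff[OF assms(2,3) h(2)] assms(5) by blast
      moreover have "last p' = hd q'" using gp_mem[OF assms(1,3) h(1)] gp_mem[OF assms(2,3) h(2)] by simp
      ultimately have "ephtp E (p' @ tl q') (p @ tl q)" by (rule ephtp_cat)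
      then show "r \<in> epclass E (p @ tl q)" using h(3) unfolding epclass_def mem_Collect_eq by (meson ephtp_sym ephtp_trans)
    next
      assume "r \<in> epclass E (p @ tl q)"
      then show "r \<in> gcat U c d E" using assms(3,4,5) by (auto simp: gcat_def epclass_def)
    qed
  qed
qed

lemma gcat_gpath: assumes "gpath U x y c" "gpath U y z d"
  shows "gpath U x z (gcat U c d)"
  unfolding gpath_def
proof (intro conjI ballI allI impI)
  fix E assume E: "E \<in> SE U"
  obtain p where p: "p \<in> c E" using gp_rep[OF assms(1) E] by blast
  obtain q where q: "q \<in> d E" using gp_rep[OF assms(2) E] by blast
  have mp: "edgepath E p" "hd p = x" "last p = y" and mq: "edgepath E q" "hd q = y" "last q = z"
    using gp_mem[OF assms(1) E p] gp_mem[OF assms(2) E q] by auto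
  show "\<exists>r. edgepath E r \<and> hd r = x \<and> last r = z \<and> gcat U c d E = epclass E r"
  proof (intro exI[of _ "p @ tl q"] conjI)
    have ne: "p \<noteq> []" "q \<noteq> []" using mp mq by auto
    show "edgepath E (p @ tl q)" using ep_cat[OF mp(1) mq(1)] mp mq by simp
    show "hd (p @ tl q) = x" using ne mp by simp
    show "last (p @ tl q) = z" using last_cat[OF ne] mp mq by simp
    show "gcat U c d E = epclass E (p @ tl q)" by (rule gcat_eq[OF assms E p q])
  qed
next
  fix E F assume E: "E \<in> SE U" and F: "F \<in> SE U" and FE: "F \<subseteq> E"
  show "gcat U c d F \<subseteq> gcat U c d E"
  proof
    fix r assume "r \<in> gcat U c d F"
    then obtain p q where h: "p \<in> c F" "q \<in> d F" "ephtp F (p @ tl q) r" using F by (auto simp: gcat_def)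
    then show "r \<in> gcat U c d E"
      using gp_mono[OF assms(1) E F FE h(1)] gp_mono[OF assms(2) E F FE h(2)] ephtp_mono[OF FE h(3)] E
      by (auto simp: gcat_def)
  qed
qed (simp add: gcat_def)

lemma gcat_mem: assumes "gpath U x y c" "gpath U y z d" "E \<in> SE U" "p \<in> c E" "q \<in> d E"
  shows "p @ tl q \<in> gcat U c d E"
proof -
  have "edgepath E (p @ tl q)" using gp_mem[OF assms(1,3,4)] gp_mem[OF assms(2,3,5)] ep_cat by metis
  then show ?thesis using gcat_eq[OF assms] epclass_self by metis
qed

lemma grev_eq: assumes "gpath U x y c" "E \<in> SE U" "p \<in> c E"
  shows "grev U c E = epclass E (rev p)"
proof (rule set_eqI)
  fix r show "r \<in> grev U c E \<longleftrightarrow> r \<in> epclass E (rev p)"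
  proof
    assume "r \<in> grev U c E"
    then obtain p' where h: "p' \<in> c E" "ephtp E (rev p') r" using assms(2) by (auto simp: grev_def)
    have "ephtp E p' p" using gp_mem_iff[OF assms(1,2) h(1)] assms(3) by blast
    then have "ephtp E (rev p') (rev p)" by (rule ephtp_rev)
    then show "r \<in> epclass E (rev p)" using h(2) unfolding epclass_def mem_Collect_eq by (meson ephtp_sym ephtp_trans)
  next
    assume "r \<in> epclass E (rev p)"
    then show "r \<in> grev U c E" using assms(2,3) by (auto simp: grev_def epclass_def)
  qed
qed

lemma grev_gpath: assumes "gpath U x y c" shows "gpath U y x (grev U c)"
  unfolding gpath_def
proof (intro conjI ballI allI impI)
  fix E assume E: "E \<in> SE U"
  obtain p where p: "p \<in> c E" using gp_rep[OF assms(1) E] by blast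
  have mp: "edgepath E p" "hd p = x" "last p = y" using gp_mem[OF assms(1) E p] by auto
  then have "p \<noteq> []" by auto
  then show "\<exists>r. edgepath E r \<and> hd r = y \<and> last r = x \<and> grev U c E = epclass E r"
    using grev_eq[OF assms E p] ep_rev[OF mp(1)] mp
    by (intro exI[of _ "rev p"]) (auto simp: hd_rev last_rev)
next
  fix E F assume E: "E \<in> SE U" and F: "F \<in> SE U" and FE: "F \<subseteq> E"
  show "grev U c F \<subseteq> grev U c E"
  proof
    fix r assume "r \<in> grev U c F"
    then obtain p where h: "p \<in> c F" "ephtp F (rev p) r" using F by (auto simp: grev_def)
    then show "r \<in> grev U c E"
      using gp_mono[OF assms(1) E F FE h(1)] ephtp_mono[OF FE h(2)] E
      by (auto simp: grev_def)
  qed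
qed (simp add: grev_def)

lemma grev_mem: assumes "gpath U x y c" "E \<in> SE U" "p \<in> c E" shows "rev p \<in> grev U c E"
proof -
  have "edgepath E (rev p)" using gp_mem[OF assms] ep_rev by metis
  then show ?thesis using grev_eq[OF assms] epclass_self by metis
qed

lemma pimage_mem: "(a,b) \<in> E \<Longrightarrow> (f a, f b) \<in> pimage f E"
  unfolding pimage_def by force

lemma pimage_iff: "(u,v) \<in> pimage f E \<longleftrightarrow> (\<exists>a b. (a,b) \<in> E \<and> u = f a \<and> v = f b)"
  unfolding pimage_def by force

lemma pimage_mono: "E \<subseteq> F \<Longrightarrow> pimage f E \<subseteq> pimage f F"
  unfolding pimage_def by blast

lemma pimage_map: "\<forall>(a,b)\<in>E. (f a, f b) \<in> pimage f E"
proof (clarify)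
  fix a b assume "(a,b) \<in> E" then show "(f a, f b) \<in> pimage f E" by (rule pimage_mem)
qed

lemma gen_D: assumes "generates_unif f X U Y V"
  shows "f ` X = Y" "\<And>E. E \<in> U \<Longrightarrow> pimage f E \<in> V" "\<And>W. W \<in> V \<Longrightarrow> \<exists>E\<in>U. pimage f E \<subseteq> W"
  using assms unfolding generates_unif_def by blast+

lemma pimage_SE: assumes "generates_unif f X U Y V" "E \<in> SE U" shows "pimage f E \<in> SE V"
proof -
  have "pimage f E \<in> V" using gen_D(2)[OF assms(1)] assms(2) SE_U by blast
  moreover have "sym (pimage f E)"
  proof (rule symI)
    fix u v assume "(u,v) \<in> pimage f E"
    then obtain a b where "(a,b) \<in> E" "u = f a" "v = f b" by (auto simp: pimage_iff)
    then show "(v,u) \<in> pimage f E" using SE_sym[OF assms(2)] pimage_mem by metis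
  qed
  ultimately show ?thesis by (simp add: SE_def)
qed

lemma gen_sub: assumes "uniformity X U" "generates_unif f X U Y V" "G \<in> V"
  shows "\<exists>F\<in>SE U. pimage f F \<subseteq> G"
proof -
  obtain E where E: "E \<in> U" "pimage f E \<subseteq> G" using gen_D(3)[OF assms(2,3)] by blast
  then show ?thesis using SE_symm[OF assms(1) E(1)] pimage_mono[of "E \<inter> E\<inverse>" E f] by blast
qed

lemma fpre_map: "\<forall>(a,b)\<in>fpre f X F. (f a, f b) \<in> F"
  unfolding fpre_def by blast

lemma le_fpre: assumes "uniformity X U" "E \<in> SE U" "pimage f E \<subseteq> F" shows "E \<subseteq> fpre f X F"
proof
  fix p assume p: "p \<in> E"
  obtain a b where ab: "p = (a,b)" by (cases p)
  have "(a,b) \<in> X \<times> X" using SE_sub[OF assms(1,2)] p ab by blast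
  moreover have "(f a, f b) \<in> F" using assms(3) pimage_mem[of a b E f] p ab by blast
  ultimately show "p \<in> fpre f X F" using ab unfolding fpre_def by simp
qed

lemma fpre_SE: assumes "uniformity X U" "generates_unif f X U Y V" "F \<in> SE V"
  shows "fpre f X F \<in> SE U"
proof -
  obtain E where E: "E \<in> SE U" "pimage f E \<subseteq> F" using gen_sub[OF assms(1,2)] assms(3) SE_U by blast
  have "E \<subseteq> fpre f X F" by (rule le_fpre[OF assms(1) E])
  moreover have "fpre f X F \<subseteq> X \<times> X" unfolding fpre_def by blast
  ultimately have "fpre f X F \<in> U" using unif_up[OF assms(1) SE_U[OF E(1)]] by blast
  moreover have "sym (fpre f X F)" using assms(3) unfolding SE_def sym_def fpre_def by blast
  ultimately show ?thesis by (simp add: SE_def)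
qed

lemma fpre_mono: "F \<subseteq> G \<Longrightarrow> fpre f X F \<subseteq> fpre f X G"
  unfolding fpre_def by blast

context
  fixes f :: "'a \<Rightarrow> 'b" and X :: "'a set" and U :: "('a \<times> 'a) set set"
    and Y :: "'b set" and V :: "('b \<times> 'b) set set"
  assumes uX: "uniformity X U" and uY: "uniformity Y V" and gen: "generates_unif f X U Y V"
begin

lemma ft_eq: assumes "gpath U x y c" "F \<in> SE V" "p \<in> c (fpre f X F)"
  shows "ftilde f X V c F = epclass F (map f p)"
proof -
  have E: "fpre f X F \<in> SE U" by (rule fpre_SE[OF uX gen assms(2)])
  show ?thesis
  proof (rule set_eqI)
    fix r show "r \<in> ftilde f X V c F \<longleftrightarrow> r \<in> epclass F (map f p)"
    proof
      assume "r \<in> ftilde f X V c F"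
      then obtain p' where h: "p' \<in> c (fpre f X F)" "ephtp F (map f p') r"
        using assms(2) by (auto simp: ftilde_def)
      have "ephtp (fpre f X F) p' p" using gp_mem_iff[OF assms(1) E h(1)] assms(3) by blast
      then have "ephtp F (map f p') (map f p)" by (rule ephtp_map[OF fpre_map])
      then show "r \<in> epclass F (map f p)" using h(2) unfolding epclass_def mem_Collect_eq
        by (meson ephtp_sym ephtp_trans)
    next
      assume "r \<in> epclass F (map f p)"
      then show "r \<in> ftilde f X V c F" using assms(2,3) by (auto simp: ftilde_def epclass_def)
    qed
  qed
qed

lemma ft_mem: assumes "gpath U x y c" "F \<in> SE V" "p \<in> c (fpre f X F)"
  shows "map f p \<in> ftilde f X V c F"
proof -
  have E: "fpre f X F \<in> SE U" by (rule fpre_SE[OF uX gen assms(2)])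
  have "edgepath (fpre f X F) p" using gp_mem[OF assms(1) E assms(3)] by blast
  then have "edgepath F (map f p)" by (rule ep_map[OF fpre_map])
  then show ?thesis using ft_eq[OF assms] epclass_self by metis
qed

lemma ft_gpath: assumes "gpath U x y c" shows "gpath V (f x) (f y) (ftilde f X V c)"
  unfolding gpath_def
proof (intro conjI ballI allI impI)
  fix F assume F: "F \<in> SE V"
  have E: "fpre f X F \<in> SE U" by (rule fpre_SE[OF uX gen F])
  obtain p where p: "p \<in> c (fpre f X F)" using gp_rep[OF assms E] by blast
  have mp: "edgepath (fpre f X F) p" "hd p = x" "last p = y" using gp_mem[OF assms E p] by auto
  then have ne: "p \<noteq> []" by auto
  show "\<exists>r. edgepath F r \<and> hd r = f x \<and> last r = f y \<and> ftilde f X V c F = epclass F r"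
  proof (intro exI[of _ "map f p"] conjI)
    show "edgepath F (map f p)" by (rule ep_map[OF fpre_map mp(1)])
    show "hd (map f p) = f x" using ne mp by (simp add: hd_map)
    show "last (map f p) = f y" using ne mp by (simp add: last_map)
    show "ftilde f X V c F = epclass F (map f p)" by (rule ft_eq[OF assms F p])
  qed
next
  fix F G assume F: "F \<in> SE V" and G: "G \<in> SE V" and GF: "G \<subseteq> F"
  have EF: "fpre f X F \<in> SE U" by (rule fpre_SE[OF uX gen F])
  have EG: "fpre f X G \<in> SE U" by (rule fpre_SE[OF uX gen G])
  show "ftilde f X V c G \<subseteq> ftilde f X V c F"
  proof
    fix r assume "r \<in> ftilde f X V c G"
    then obtain p where h: "p \<in> c (fpre f X G)" "ephtp G (map f p) r" using G by (auto simp: ftilde_def)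
    have "p \<in> c (fpre f X F)" using gp_mono[OF assms EF EG fpre_mono[OF GF] h(1)] .
    then show "r \<in> ftilde f X V c F" using ephtp_mono[OF GF h(2)] F by (auto simp: ftilde_def)
  qed
qed (simp add: ftilde_def)

lemma ft_GP: assumes "c \<in> GP X U x0" shows "ftilde f X V c \<in> GP Y V (f x0)"
proof -
  obtain y where y: "y \<in> X" "gpath U x0 y c" using assms by (auto simp: GP_def gpath_from_def)
  then show ?thesis using ft_gpath[OF y(2)] gen_D(1)[OF gen] by (auto simp: GP_def gpath_from_def)
qed

lemma ft_cat: assumes "gpath U x y c" "gpath U y z d"
  shows "ftilde f X V (gcat U c d) = gcat V (ftilde f X V c) (ftilde f X V d)"
proof (rule gp_ext[OF ft_gpath[OF gcat_gpath[OF assms]] gcat_gpath[OF ft_gpath[OF assms(1)] ft_gpath[OF assms(2)]]])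
  fix F assume F: "F \<in> SE V"
  have E: "fpre f X F \<in> SE U" by (rule fpre_SE[OF uX gen F])
  obtain p where p: "p \<in> c (fpre f X F)" using gp_rep[OF assms(1) E] by blast
  obtain q where q: "q \<in> d (fpre f X F)" using gp_rep[OF assms(2) E] by blast
  have ne: "q \<noteq> []" using gp_mem[OF assms(2) E q] by auto
  have 1: "map f (p @ tl q) \<in> ftilde f X V (gcat U c d) F"
    by (rule ft_mem[OF gcat_gpath[OF assms] F gcat_mem[OF assms E p q]])
  have 2: "map f p @ tl (map f q) \<in> gcat V (ftilde f X V c) (ftilde f X V d) F"
    by (rule gcat_mem[OF ft_gpath[OF assms(1)] ft_gpath[OF assms(2)] F ft_mem[OF assms(1) F p] ft_mem[OF assms(2) F q]])
  show "\<exists>r. r \<in> ftilde f X V (gcat U c d) F \<and> r \<in> gcat V (ftilde f X V c) (ftilde f X V d) F"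
    using 1 2 by (auto simp: map_tl)
qed

lemma ft_rev: assumes "gpath U x y c"
  shows "ftilde f X V (grev U c) = grev V (ftilde f X V c)"
proof (rule gp_ext[OF ft_gpath[OF grev_gpath[OF assms]] grev_gpath[OF ft_gpath[OF assms]]])
  fix F assume F: "F \<in> SE V"
  have E: "fpre f X F \<in> SE U" by (rule fpre_SE[OF uX gen F])
  obtain p where p: "p \<in> c (fpre f X F)" using gp_rep[OF assms E] by blast
  have 1: "map f (rev p) \<in> ftilde f X V (grev U c) F"
    by (rule ft_mem[OF grev_gpath[OF assms] F grev_mem[OF assms E p]])
  have 2: "rev (map f p) \<in> grev V (ftilde f X V c) F"
    by (rule grev_mem[OF ft_gpath[OF assms] F ft_mem[OF assms F p]])
  show "\<exists>r. r \<in> ftilde f X V (grev U c) F \<and> r \<in> grev V (ftilde f X V c) F"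
    using 1 2 by (auto simp: rev_map)
qed

lemma ft_const: assumes "x \<in> X" "F \<in> SE V" shows "[f x] \<in> ftilde f X V (gconst U x) F"
proof -
  have E: "fpre f X F \<in> SE U" by (rule fpre_SE[OF uX gen assms(2)])
  have "[x] \<in> gconst U x (fpre f X F)" by (rule gconst_mem[OF uX assms(1) E])
  from ft_mem[OF gconst_gpath[OF uX assms(1)] assms(2) this] show ?thesis by simp
qed

end

lemma gp_htp_any: assumes "gpath U x y c" "gpath U x' y' d" "E \<in> SE U" "gp_htp E c d"
  "p \<in> c E" "q \<in> d E" shows "ehtp E p q"
proof -
  obtain p' q' where h: "p' \<in> c E" "q' \<in> d E" "ehtp E p' q'" using assms(4) by (auto simp: gp_htp_def)
  show ?thesis using ehtp_cong[OF h(3)] gp_mem_iff[OF assms(1,3) h(1)] gp_mem_iff[OF assms(2,3) h(2)] assms(5,6)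
    by blast
qed

lemma gp_htp_mono: assumes "gpath U x y c" "gpath U x' y' d" "E \<in> SE U" "F \<in> SE U" "E \<subseteq> F"
  "gp_htp E c d" shows "gp_htp F c d"
proof -
  obtain p q where h: "p \<in> c E" "q \<in> d E" "ehtp E p q" using assms(6) by (auto simp: gp_htp_def)
  show ?thesis unfolding gp_htp_def
    using gp_mono[OF assms(1,4,3,5) h(1)] gp_mono[OF assms(2,4,3,5) h(2)] ehtp_mono[OF assms(5) h(3)] by blast
qed

lemma echain_Cons2: "echain X E (x#y#p) \<longleftrightarrow> x \<in> X \<and> (x,y) \<in> E \<and> echain X E (y#p)"
proof -
  have A: "(\<forall>i. Suc i < length (x#y#p) \<longrightarrow> ((x#y#p) ! i, (x#y#p) ! Suc i) \<in> E)
     \<longleftrightarrow> (x,y) \<in> E \<and> (\<forall>i. Suc i < length (y#p) \<longrightarrow> ((y#p) ! i, (y#p) ! Suc i) \<in> E)"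
    (is "?L \<longleftrightarrow> ?R")
  proof
    assume L: ?L
    have "(x,y) \<in> E" using L[rule_format, of 0] by simp
    moreover have "\<forall>i. Suc i < length (y#p) \<longrightarrow> ((y#p) ! i, (y#p) ! Suc i) \<in> E"
    proof (intro allI impI)
      fix i assume "Suc i < length (y#p)"
      then show "((y#p) ! i, (y#p) ! Suc i) \<in> E" using L[rule_format, of "Suc i"] by simp
    qed
    ultimately show ?R by blast
  next
    assume R: ?R
    show ?L
    proof (intro allI impI)
      fix i assume "Suc i < length (x#y#p)"
      then show "((x#y#p) ! i, (x#y#p) ! Suc i) \<in> E"
        using R by (cases i) auto
    qed
  qed
  show ?thesis unfolding echain_def A by auto
qed

lemma echain_single: "echain X E [x] \<longleftrightarrow> x \<in> X"
  by (simp add: echain_def)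

lemma echain_mono: "E \<subseteq> F \<Longrightarrow> echain X E p \<Longrightarrow> echain X F p"
  unfolding echain_def by blast

lemma chain_gpath:
  assumes u: "uniformity X U" and E: "E \<in> SE U"
    and J: "\<forall>(x, y)\<in>F. \<exists>c. gpath U x y c \<and> gp_short E x y c"
    and ch: "echain X F \<alpha>"
  shows "\<exists>c. gpath U (hd \<alpha>) (last \<alpha>) c \<and> \<alpha> \<in> c E"
  using ch
proof (induction \<alpha> rule: induct_list012)
  case 1 then show ?case by (simp add: echain_def)
next
  case (2 x)
  then have x: "x \<in> X" by (simp add: echain_single)
  show ?case using gconst_gpath[OF u x] gconst_mem[OF u x E] by auto
next
  case (3 x y zs)
  have xy: "(x,y) \<in> F" and ch2: "echain X F (y#zs)" using "3.prems" by (auto simp: echain_Cons2)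
  obtain c1 where c1: "gpath U x y c1" "[x,y] \<in> c1 E" using J xy by (auto simp: gp_short_def)
  obtain c2 where c2: "gpath U y (last (y#zs)) c2" "y#zs \<in> c2 E" using "3.IH"(2)[OF ch2] by auto
  have "[x,y] @ tl (y#zs) \<in> gcat U c1 c2 E" by (rule gcat_mem[OF c1(1) c2(1) E c1(2) c2(2)])
  then show ?case using gcat_gpath[OF c1(1) c2(1)] by auto
qed

lemma points_gpath:
  assumes u: "uniformity X U" and uj: "uniformly_joinable X U" and cc: "chain_connected X U"
    and x: "x \<in> X" and y: "y \<in> X"
  shows "\<exists>c. gpath U x y c"
proof -
  have E: "X \<times> X \<in> SE U" by (rule SE_full[OF u])
  obtain F where F: "F \<in> SE U" "\<forall>(x, y)\<in>F. \<exists>c. gpath U x y c \<and> gp_short (X \<times> X) x y c"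
    using uj E unfolding uniformly_joinable_def by blast
  obtain p where p: "echain X F p" "hd p = x" "last p = y" using cc F(1) x y unfolding chain_connected_def by blast
  show ?thesis using chain_gpath[OF u E F(2) p(1)] p by auto
qed

lemma list_cancel: assumes "edgepath E p" "edgepath E q" "hd q = last p"
  shows "ephtp E (rev p @ tl (p @ tl q)) q"
proof -
  have ne: "p \<noteq> []" "q \<noteq> []" using assms by auto
  have c: "ephtp E (rev p @ tl p) [last p]" by (rule ephtp_cancel[OF assms(1)])
  have "last (rev p @ tl p) = last p" using ephtp_hd_last[OF c] by simp
  then have 2: "ephtp E ((rev p @ tl p) @ tl q) ([last p] @ tl q)"
    using c assms by (intro ephtp_cat ephtp_refl) auto
  have 3: "[last p] @ tl q = q" using ne assms(3) by (metis append_Cons append_Nil list.collapse)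
  show ?thesis using 2 3 ne by simp
qed

lemma gcat_cancel: assumes "gpath U a b g" "gpath U b w c"
  shows "gcat U (grev U g) (gcat U g c) = c"
proof (rule gp_ext[OF gcat_gpath[OF grev_gpath[OF assms(1)] gcat_gpath[OF assms]] assms(2)])
  fix E assume E: "E \<in> SE U"
  obtain p where p: "p \<in> g E" using gp_rep[OF assms(1) E] by blast
  obtain q where q: "q \<in> c E" using gp_rep[OF assms(2) E] by blast
  have m: "rev p @ tl (p @ tl q) \<in> gcat U (grev U g) (gcat U g c) E"
    by (rule gcat_mem[OF grev_gpath[OF assms(1)] gcat_gpath[OF assms] E grev_mem[OF assms(1) E p] gcat_mem[OF assms E p q]])
  have "ephtp E (rev p @ tl (p @ tl q)) q"
    using gp_mem[OF assms(1) E p] gp_mem[OF assms(2) E q] by (intro list_cancel) auto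
  then have "q \<in> gcat U (grev U g) (gcat U g c) E"
    using gp_mem_iff[OF gcat_gpath[OF grev_gpath[OF assms(1)] gcat_gpath[OF assms]] E m] by blast
  then show "\<exists>p. p \<in> gcat U (grev U g) (gcat U g c) E \<and> p \<in> c E" using q by blast
qed

lemma gp_htp_pre: assumes "gpath U u v g" "gpath U v w a" "gpath U v w' b" "E \<in> SE U" "gp_htp E a b"
  shows "gp_htp E (gcat U g a) (gcat U g b)"
proof -
  obtain p q where h: "p \<in> a E" "q \<in> b E" "ehtp E p q" using assms(5) by (auto simp: gp_htp_def)
  obtain r where r: "r \<in> g E" using gp_rep[OF assms(1,4)] by blast
  have mr: "edgepath E r" "last r = v" using gp_mem[OF assms(1,4) r] by auto
  have mp: "hd p = v" using gp_mem[OF assms(2,4) h(1)] by auto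
  have mq: "hd q = v" "q \<noteq> []" using gp_mem[OF assms(3,4) h(2)] by auto
  have "ehtp E (r @ tl p) (r @ tl q)" using mr mp mq by (intro ehtp_prefix[OF h(3)]) auto
  then show ?thesis unfolding gp_htp_def
    using gcat_mem[OF assms(1,2,4) r h(1)] gcat_mem[OF assms(1,3,4) r h(2)] by blast
qed

lemma gp_htp_cancel: assumes "gpath U u v g" "gpath U v w a" "gpath U v w' b" "E \<in> SE U"
  "gp_htp E (gcat U g a) (gcat U g b)"
  shows "gp_htp E a b"
proof -
  obtain p where p: "p \<in> a E" using gp_rep[OF assms(2,4)] by blast
  obtain q where q: "q \<in> b E" using gp_rep[OF assms(3,4)] by blast
  obtain r where r: "r \<in> g E" using gp_rep[OF assms(1,4)] by blast
  have "ehtp E (r @ tl p) (r @ tl q)"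
    by (rule gp_htp_any[OF gcat_gpath[OF assms(1,2)] gcat_gpath[OF assms(1,3)] assms(4,5)
        gcat_mem[OF assms(1,2,4) r p] gcat_mem[OF assms(1,3,4) r q]])
  moreover have "edgepath E r" "last r = v" using gp_mem[OF assms(1,4) r] by auto
  moreover have "edgepath E p" "hd p = v" using gp_mem[OF assms(2,4) p] by auto
  moreover have "edgepath E q" "hd q = v" using gp_mem[OF assms(3,4) q] by auto
  ultimately have "ehtp E p q" by (metis ehtp_cancel)
  then show ?thesis unfolding gp_htp_def using p q by blast
qed

context
  fixes f :: "'a \<Rightarrow> 'b" and X :: "'a set" and U :: "('a \<times> 'a) set set"
    and Y :: "'b set" and V :: "('b \<times> 'b) set set"
  assumes uX: "uniformity X U" and uY: "uniformity Y V" and gen: "generates_unif f X U Y V"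
begin

lemma C1_from:
  assumes uj: "uniformly_joinable X U" and g1: "GP1 f X U Y V" and g2: "GP2 f X U Y V"
  shows "C1 f X U Y"
  unfolding C1_def
proof (intro ballI)
  fix E assume E: "E \<in> SE U"
  obtain F2 where F2: "F2 \<in> SE U" and P2: "\<forall>x0\<in>X. \<forall>\<alpha> \<beta>.
     gpath_from X U x0 \<alpha> \<and> gpath_from X U x0 \<beta>
     \<and> gp_htp (pimage f F2) (ftilde f X V \<alpha>) (ftilde f X V \<beta>) \<longrightarrow> gp_htp E \<alpha> \<beta>"
    using g2 E unfolding GP2_def by blast
  define E0 where "E0 = E \<inter> F2"
  have E0: "E0 \<in> SE U" unfolding E0_def by (rule SE_int[OF uX E F2])
  obtain F1 where F1: "F1 \<in> SE U" and J: "\<forall>(x, y)\<in>F1. \<exists>c. gpath U x y c \<and> gp_short E0 x y c"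
    using uj E0 unfolding uniformly_joinable_def by blast
  define F where "F = F1 \<inter> F2"
  have F: "F \<in> SE U" unfolding F_def by (rule SE_int[OF uX F1 F2])
  define G where "G = pimage f F2"
  have G: "G \<in> SE V" unfolding G_def by (rule pimage_SE[OF gen F2])
  have F2G: "F2 \<subseteq> fpre f X G" unfolding G_def by (rule le_fpre[OF uX F2]) simp
  have EG: "fpre f X G \<in> SE U" by (rule fpre_SE[OF uX gen G])
  have step: "\<exists>z\<in>X. (x,z) \<in> E \<and> f z = b" if x: "x \<in> X" and xb: "(f x, b) \<in> pimage f F" for x b
  proof -
    obtain u v where uv: "(u,v) \<in> F" "f x = f u" "b = f v" using xb by (auto simp: pimage_iff)
    have uvX: "u \<in> X" "v \<in> X" using SE_sub[OF uX F] uv(1) by auto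
    obtain c where c: "gpath U u v c" "[u,v] \<in> c E0" using J uv(1) unfolding F_def gp_short_def by blast
    have fc: "gpath V (f x) b (ftilde f X V c)" using ft_gpath[OF uX uY gen c(1)] uv by simp
    have "b \<in> Y" using gen_D(1)[OF gen] uv(3) uvX by blast
    then have "gpath_from Y V (f x) (ftilde f X V c)" using fc by (auto simp: gpath_from_def)
    then obtain d where d: "gpath_from X U x d" "ftilde f X V d = ftilde f X V c"
      using g1 x unfolding GP1_def by blast
    then obtain z where z: "z \<in> X" "gpath U x z d" by (auto simp: gpath_from_def)
    have "gpath V (f x) (f z) (ftilde f X V c)" using ft_gpath[OF uX uY gen z(2)] d(2) by simp
    then have fz: "f z = b" using gp_end_unique[OF uY fc] by simp
    have gc: "gpath U x x (gconst U x)" by (rule gconst_gpath[OF uX x])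
    have m1: "[f u, f v] \<in> ftilde f X V d G"
    proof -
      have "[u,v] \<in> c (fpre f X G)" using gp_mono[OF c(1) EG E0] c(2) F2G unfolding E0_def by blast
      from ft_mem[OF uX uY gen c(1) G this] show ?thesis using d(2) by simp
    qed
    have m2: "[f x] \<in> ftilde f X V (gconst U x) G" by (rule ft_const[OF uX uY gen x G])
    have xx: "(x,x) \<in> F2" "(v,v) \<in> F2" using SE_diag[OF uX F2] x uvX by auto
    have vu: "(v,u) \<in> F2" using SE_sym[OF F2] uv(1) unfolding F_def by blast
    have uv2: "(u,v) \<in> F2" using uv(1) unfolding F_def by blast
    have G1: "(f x, f x) \<in> G" "(f v, f v) \<in> G" "(f v, f x) \<in> G" "(f x, f v) \<in> G"
      unfolding G_def using pimage_mem xx vu uv2 uv(2) by metis+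
    have ep: "edgepath G [f x, f v]" using G1 by simp
    have "ephtp G ([] @ [f x, f x] @ [f v]) ([] @ [f x] @ [f v])" using ep by (intro ephtp_stutter) simp
    then have "ephtp G [f x, f v] ([hd [f x, f v]] @ [f x] @ [last [f x, f v]])" by (simp add: ephtp_sym)
    then have "ehtp G [f u, f v] [f x]" unfolding ehtp_def using G1 uv(2) by simp
    then have "gp_htp (pimage f F2) (ftilde f X V d) (ftilde f X V (gconst U x))"
      unfolding gp_htp_def G_def[symmetric] using m1 m2 by blast
    moreover have "gpath_from X U x (gconst U x)" using gc x by (auto simp: gpath_from_def)
    ultimately have "gp_htp E d (gconst U x)" using P2 x d(1) by blast
    then obtain p q where pq: "p \<in> d E" "q \<in> gconst U x E" "ehtp E p q" by (auto simp: gp_htp_def)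
    have "last p = z" using gp_mem[OF z(2) E pq(1)] by simp
    moreover have "last q = x" using gp_mem[OF gc E pq(2)] by simp
    ultimately have "(z,x) \<in> E" using pq(3) by (simp add: ehtp_def)
    then have "(x,z) \<in> E" using SE_sym[OF E] by blast
    then show ?thesis using z(1) fz by blast
  qed
  have lift: "\<forall>x0\<in>X. hd \<beta> = f x0 \<longrightarrow> (\<exists>\<alpha>. echain X E \<alpha> \<and> hd \<alpha> = x0 \<and> map f \<alpha> = \<beta>)"
    if "echain Y (pimage f F) \<beta>" for \<beta>
    using that
  proof (induction \<beta> rule: induct_list012)
    case 1 then show ?case by (simp add: echain_def)
  next
    case (2 b)
    show ?case
    proof (intro ballI impI)
      fix x0 assume "x0 \<in> X" "hd [b] = f x0"
      then show "\<exists>\<alpha>. echain X E \<alpha> \<and> hd \<alpha> = x0 \<and> map f \<alpha> = [b]"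
        by (intro exI[of _ "[x0]"]) (simp add: echain_single)
    qed
  next
    case (3 b b' rest)
    have bb: "(b,b') \<in> pimage f F" and ch: "echain Y (pimage f F) (b'#rest)"
      using "3.prems" by (auto simp: echain_Cons2)
    show ?case
    proof (intro ballI impI)
      fix x0 assume x0: "x0 \<in> X" "hd (b#b'#rest) = f x0"
      then obtain z where z: "z \<in> X" "(x0,z) \<in> E" "f z = b'" using step[of x0 b'] bb by auto
      have hz: "hd (b'#rest) = f z" using z(3) by simp
      obtain \<alpha> where a: "echain X E \<alpha>" "hd \<alpha> = z" "map f \<alpha> = b'#rest"
        using "3.IH"(2)[OF ch, rule_format, OF z(1) hz] by (elim exE conjE) (rule that)
      have "\<alpha> \<noteq> []" using a(3) by auto
      then obtain t where t: "\<alpha> = z # t" using a(2) by (cases \<alpha>) auto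
      show "\<exists>\<alpha>. echain X E \<alpha> \<and> hd \<alpha> = x0 \<and> map f \<alpha> = b#b'#rest"
        using a t x0 z by (intro exI[of _ "x0 # \<alpha>"]) (simp add: echain_Cons2)
    qed
  qed
  show "\<exists>F\<in>SE U. \<forall>x0\<in>X. \<forall>\<beta>. echain Y (pimage f F) \<beta> \<and> hd \<beta> = f x0 \<longrightarrow>
       (\<exists>\<alpha>. echain X E \<alpha> \<and> hd \<alpha> = x0 \<and> map f \<alpha> = \<beta>)"
    using F lift by blast
qed


lemma C2_from:
  assumes uj: "uniformly_joinable X U" and g2: "GP2 f X U Y V"
  shows "C2 f X U"
  unfolding C2_def
proof (intro ballI)
  fix E assume E: "E \<in> SE U"
  obtain F2 where F2: "F2 \<in> SE U" and P2: "\<forall>x0\<in>X. \<forall>\<alpha> \<beta>.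
     gpath_from X U x0 \<alpha> \<and> gpath_from X U x0 \<beta>
     \<and> gp_htp (pimage f F2) (ftilde f X V \<alpha>) (ftilde f X V \<beta>) \<longrightarrow> gp_htp E \<alpha> \<beta>"
    using g2 E unfolding GP2_def by blast
  define E0 where "E0 = E \<inter> F2"
  have E0: "E0 \<in> SE U" unfolding E0_def by (rule SE_int[OF uX E F2])
  obtain F1 where F1: "F1 \<in> SE U" and J: "\<forall>(x, y)\<in>F1. \<exists>c. gpath U x y c \<and> gp_short E0 x y c"
    using uj E0 unfolding uniformly_joinable_def by blast
  define F where "F = F1 \<inter> E0"
  have F: "F \<in> SE U" unfolding F_def by (rule SE_int[OF uX F1 E0])
  define G where "G = pimage f F2"
  have G: "G \<in> SE V" unfolding G_def by (rule pimage_SE[OF gen F2])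
  have F2G: "F2 \<subseteq> fpre f X G" unfolding G_def by (rule le_fpre[OF uX F2]) simp
  have EG: "fpre f X G \<in> SE U" by (rule fpre_SE[OF uX gen G])
  have E0G: "E0 \<subseteq> fpre f X G" using F2G unfolding E0_def by blast
  have E0E: "E0 \<subseteq> E" unfolding E0_def by blast
  have FG: "pimage f F \<subseteq> G" unfolding G_def F_def E0_def by (rule pimage_mono) blast
  have "ehtp E \<alpha> \<beta>" if a: "echain X F \<alpha>" and b: "echain X F \<beta>" and hab: "hd \<alpha> = hd \<beta>"
     and h: "ehtp (pimage f F) (map f \<alpha>) (map f \<beta>)" for \<alpha> \<beta>
  proof -
    have a1: "echain X F1 \<alpha>" "echain X F1 \<beta>" using a b echain_mono[of F F1] unfolding F_def by auto
    obtain ga where ga: "gpath U (hd \<alpha>) (last \<alpha>) ga" "\<alpha> \<in> ga E0" using chain_gpath[OF uX E0 J a1(1)] by blast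
    obtain gb where gb: "gpath U (hd \<beta>) (last \<beta>) gb" "\<beta> \<in> gb E0" using chain_gpath[OF uX E0 J a1(2)] by blast
    have ne: "\<alpha> \<noteq> []" "\<beta> \<noteq> []" using a b by (auto simp: echain_def)
    have x0: "hd \<alpha> \<in> X" "last \<alpha> \<in> X" "last \<beta> \<in> X" using a b ne by (auto simp: echain_def)
    have m1: "map f \<alpha> \<in> ftilde f X V ga G" by (rule ft_mem[OF uX uY gen ga(1) G gp_mono[OF ga(1) EG E0 E0G ga(2)]])
    have m2: "map f \<beta> \<in> ftilde f X V gb G" by (rule ft_mem[OF uX uY gen gb(1) G gp_mono[OF gb(1) EG E0 E0G gb(2)]])
    have "ehtp G (map f \<alpha>) (map f \<beta>)" by (rule ehtp_mono[OF FG h])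
    then have "gp_htp (pimage f F2) (ftilde f X V ga) (ftilde f X V gb)"
      unfolding gp_htp_def G_def[symmetric] using m1 m2 by blast
    moreover have "gpath_from X U (hd \<alpha>) ga" "gpath_from X U (hd \<alpha>) gb"
      using ga gb x0 hab by (auto simp: gpath_from_def)
    ultimately have "gp_htp E ga gb" using P2 x0(1) by blast
    then obtain p q where pq: "p \<in> ga E" "q \<in> gb E" "ehtp E p q" by (auto simp: gp_htp_def)
    have "\<alpha> \<in> ga E" by (rule gp_mono[OF ga(1) E E0 E0E ga(2)])
    then have pa: "ephtp E p \<alpha>" using gp_mem_iff[OF ga(1) E pq(1)] by blast
    have "\<beta> \<in> gb E" by (rule gp_mono[OF gb(1) E E0 E0E gb(2)])
    then have qb: "ephtp E q \<beta>" using gp_mem_iff[OF gb(1) E pq(2)] by blast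
    show ?thesis by (rule ehtp_cong[OF pq(3) pa qb])
  qed
  then show "\<exists>F\<in>SE U. \<forall>\<alpha> \<beta>. echain X F \<alpha> \<and> echain X F \<beta> \<and> hd \<alpha> = hd \<beta>
     \<and> ehtp (pimage f F) (map f \<alpha>) (map f \<beta>) \<longrightarrow> ehtp E \<alpha> \<beta>" using F by blast
qed


lemma GP_mem: "c \<in> GP X U x0 \<longleftrightarrow> (\<exists>y\<in>X. gpath U x0 y c)"
  by (simp add: GP_def gpath_from_def)

lemma GPY_mem: "c \<in> GP Y V y0 \<longleftrightarrow> (\<exists>y\<in>Y. gpath V y0 y c)"
  by (simp add: GP_def gpath_from_def)

lemma haus_eq: assumes hX: "hausdorff_unif X U" and y: "y \<in> X" "y' \<in> X" and all: "\<forall>E\<in>SE U. (y,y') \<in> E"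
  shows "y = y'"
proof -
  have "(y,y') \<in> \<Inter>U"
  proof
    fix E assume "E \<in> U"
    then have "E \<inter> E\<inverse> \<in> SE U" by (rule SE_symm[OF uX])
    then show "(y,y') \<in> E" using all by blast
  qed
  then show ?thesis using hX unfolding hausdorff_unif_def by auto
qed

lemma ft_inj:
  assumes hX: "hausdorff_unif X U" and g2: "GP2 f X U Y V"
  shows "inj_on (ftilde f X V) (GP X U x0)"
proof (rule inj_onI)
  fix a b assume a: "a \<in> GP X U x0" and b: "b \<in> GP X U x0" and eq: "ftilde f X V a = ftilde f X V b"
  obtain y where y: "y \<in> X" "gpath U x0 y a" using a by (auto simp: GP_mem)
  obtain y' where y': "y' \<in> X" "gpath U x0 y' b" using b by (auto simp: GP_mem)
  have x0: "x0 \<in> X" using gp_pts[OF uX y(2)] by blast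
  have H: "gp_htp E a b" if E: "E \<in> SE U" for E
  proof -
    obtain F2 where F2: "F2 \<in> SE U" and P2: "\<forall>x0\<in>X. \<forall>\<alpha> \<beta>.
       gpath_from X U x0 \<alpha> \<and> gpath_from X U x0 \<beta>
       \<and> gp_htp (pimage f F2) (ftilde f X V \<alpha>) (ftilde f X V \<beta>) \<longrightarrow> gp_htp E \<alpha> \<beta>"
      using g2 E unfolding GP2_def by blast
    have G: "pimage f F2 \<in> SE V" by (rule pimage_SE[OF gen F2])
    obtain r where r: "r \<in> ftilde f X V a (pimage f F2)" "edgepath (pimage f F2) r"
      using gp_rep[OF ft_gpath[OF uX uY gen y(2)] G] by blast
    have "gp_htp (pimage f F2) (ftilde f X V a) (ftilde f X V b)"
      unfolding gp_htp_def using r eq ehtp_refl[OF r(2)] by metis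
    moreover have "gpath_from X U x0 a" "gpath_from X U x0 b" using y y' by (auto simp: gpath_from_def)
    ultimately show ?thesis using P2 x0 by blast
  qed
  have yy: "y = y'"
  proof (rule haus_eq[OF hX y(1) y'(1)], intro ballI)
    fix E assume E: "E \<in> SE U"
    obtain p q where pq: "p \<in> a E" "q \<in> b E" "ehtp E p q" using H[OF E] by (auto simp: gp_htp_def)
    then show "(y,y') \<in> E" using gp_mem[OF y(2) E pq(1)] gp_mem[OF y'(2) E pq(2)] by (simp add: ehtp_def)
  qed
  show "a = b"
  proof (rule gp_ext[OF y(2) y'(2)])
    fix E assume E: "E \<in> SE U"
    obtain p q where pq: "p \<in> a E" "q \<in> b E" "ehtp E p q" using H[OF E] by (auto simp: gp_htp_def)
    have mp: "hd p = x0" "last p = y" using gp_mem[OF y(2) E pq(1)] by auto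
    have mq: "edgepath E q" "hd q = x0" "last q = y'" using gp_mem[OF y'(2) E pq(2)] by auto
    have 1: "ephtp E p ([x0] @ q @ [y])" using pq(3) mp by (simp add: ehtp_def)
    have eq2: "edgepath E (q @ [last q])" using ephtp_back[OF mq(1)] by (simp add: ephtp_def)
    have 2: "ephtp E ([hd (q @ [last q])] @ (q @ [last q])) (q @ [last q])" by (rule ephtp_front[OF eq2])
    have 3: "ephtp E (q @ [last q]) q" by (rule ephtp_back[OF mq(1)])
    have "q \<noteq> []" using mq by auto
    then have "ephtp E p q" using ephtp_trans[OF 1 ephtp_trans[OF _ 3]] 2 mq yy by simp
    then have "p \<in> b E" using gp_mem_iff[OF y'(2) E pq(2)] by (meson ephtp_sym)
    then show "\<exists>p. p \<in> a E \<and> p \<in> b E" using pq(1) by blast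
  qed
qed

lemma ft_image:
  assumes g1: "GP1 f X U Y V" and x0: "x0 \<in> X"
  shows "ftilde f X V ` GP X U x0 = GP Y V (f x0)"
proof
  show "ftilde f X V ` GP X U x0 \<subseteq> GP Y V (f x0)" using ft_GP[OF uX uY gen] by blast
  show "GP Y V (f x0) \<subseteq> ftilde f X V ` GP X U x0"
  proof
    fix c assume "c \<in> GP Y V (f x0)"
    then have "gpath_from Y V (f x0) c" by (simp add: GP_def)
    then obtain d where "gpath_from X U x0 d" "ftilde f X V d = c" using g1 x0 unfolding GP1_def by blast
    then show "c \<in> ftilde f X V ` GP X U x0" by (auto simp: GP_def)
  qed
qed

lemma ft_ucont: "ucont (GP X U x0) (GP_unif X U x0) (GP_unif Y V (f x0)) (ftilde f X V)"
  unfolding ucont_def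
proof (intro ballI)
  fix W assume "W \<in> GP_unif Y V (f x0)"
  then obtain G where G: "G \<in> SE V" and GW: "{(c, d). c \<in> GP Y V (f x0) \<and> d \<in> GP Y V (f x0) \<and> gp_htp G c d} \<subseteq> W"
    unfolding GP_unif_def by blast
  obtain F where F: "F \<in> SE U" "pimage f F \<subseteq> G" using gen_sub[OF uX gen SE_U[OF G]] by blast
  have FG: "F \<subseteq> fpre f X G" by (rule le_fpre[OF uX F])
  have EG: "fpre f X G \<in> SE U" by (rule fpre_SE[OF uX gen G])
  have FM: "\<forall>(a,b)\<in>F. (f a, f b) \<in> G" using F(2) pimage_mem by (metis (mono_tags, lifting) case_prodI2 subsetD)
  show "{(a, b). a \<in> GP X U x0 \<and> b \<in> GP X U x0 \<and> (ftilde f X V a, ftilde f X V b) \<in> W} \<in> GP_unif X U x0"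
    unfolding GP_unif_def
  proof (intro CollectI conjI bexI[OF _ F(1)])
    show "{(a, b). a \<in> GP X U x0 \<and> b \<in> GP X U x0 \<and> (ftilde f X V a, ftilde f X V b) \<in> W} \<subseteq> GP X U x0 \<times> GP X U x0"
      by blast
    show "{(c, d). c \<in> GP X U x0 \<and> d \<in> GP X U x0 \<and> gp_htp F c d}
      \<subseteq> {(a, b). a \<in> GP X U x0 \<and> b \<in> GP X U x0 \<and> (ftilde f X V a, ftilde f X V b) \<in> W}"
    proof (clarify)
      fix a b assume a: "a \<in> GP X U x0" and b: "b \<in> GP X U x0" and h: "gp_htp F a b"
      obtain y where y: "gpath U x0 y a" using a by (auto simp: GP_mem)
      obtain y' where y': "gpath U x0 y' b" using b by (auto simp: GP_mem)
      obtain p q where pq: "p \<in> a F" "q \<in> b F" "ehtp F p q" using h by (auto simp: gp_htp_def)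
      have "q \<noteq> []" using gp_mem[OF y' F(1) pq(2)] by auto
      then have "ehtp G (map f p) (map f q)" by (rule ehtp_map[OF FM pq(3)])
      moreover have "map f p \<in> ftilde f X V a G" by (rule ft_mem[OF uX uY gen y G gp_mono[OF y EG F(1) FG pq(1)]])
      moreover have "map f q \<in> ftilde f X V b G" by (rule ft_mem[OF uX uY gen y' G gp_mono[OF y' EG F(1) FG pq(2)]])
      ultimately have "gp_htp G (ftilde f X V a) (ftilde f X V b)" unfolding gp_htp_def by blast
      then show "(ftilde f X V a, ftilde f X V b) \<in> W" using GW ft_GP[OF uX uY gen a] ft_GP[OF uX uY gen b] by blast
    qed
  qed
qed

lemma ft_inv_ucont:
  assumes g2: "GP2 f X U Y V" and bij: "bij_betw (ftilde f X V) (GP X U x0) (GP Y V (f x0))"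
  shows "ucont (GP Y V (f x0)) (GP_unif Y V (f x0)) (GP_unif X U x0) (inv_into (GP X U x0) (ftilde f X V))"
  unfolding ucont_def
proof (intro ballI)
  fix W assume "W \<in> GP_unif X U x0"
  then obtain E where E: "E \<in> SE U" and EW: "{(c, d). c \<in> GP X U x0 \<and> d \<in> GP X U x0 \<and> gp_htp E c d} \<subseteq> W"
    unfolding GP_unif_def by blast
  obtain F2 where F2: "F2 \<in> SE U" and P2: "\<forall>x0\<in>X. \<forall>\<alpha> \<beta>.
     gpath_from X U x0 \<alpha> \<and> gpath_from X U x0 \<beta>
     \<and> gp_htp (pimage f F2) (ftilde f X V \<alpha>) (ftilde f X V \<beta>) \<longrightarrow> gp_htp E \<alpha> \<beta>"
    using g2 E unfolding GP2_def by blast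
  have G: "pimage f F2 \<in> SE V" by (rule pimage_SE[OF gen F2])
  let ?g = "inv_into (GP X U x0) (ftilde f X V)"
  show "{(a, b). a \<in> GP Y V (f x0) \<and> b \<in> GP Y V (f x0) \<and> (?g a, ?g b) \<in> W} \<in> GP_unif Y V (f x0)"
    unfolding GP_unif_def
  proof (intro CollectI conjI bexI[OF _ G])
    show "{(a, b). a \<in> GP Y V (f x0) \<and> b \<in> GP Y V (f x0) \<and> (?g a, ?g b) \<in> W} \<subseteq> GP Y V (f x0) \<times> GP Y V (f x0)"
      by blast
    show "{(c, d). c \<in> GP Y V (f x0) \<and> d \<in> GP Y V (f x0) \<and> gp_htp (pimage f F2) c d}
      \<subseteq> {(a, b). a \<in> GP Y V (f x0) \<and> b \<in> GP Y V (f x0) \<and> (?g a, ?g b) \<in> W}"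
    proof (clarify)
      fix a b assume a: "a \<in> GP Y V (f x0)" and b: "b \<in> GP Y V (f x0)" and h: "gp_htp (pimage f F2) a b"
      have ia: "a \<in> ftilde f X V ` GP X U x0" using a bij by (simp add: bij_betw_def)
      have ga: "?g a \<in> GP X U x0" "ftilde f X V (?g a) = a"
        using inv_into_into[OF ia] f_inv_into_f[OF ia] by auto
      have ib: "b \<in> ftilde f X V ` GP X U x0" using b bij by (simp add: bij_betw_def)
      have gb: "?g b \<in> GP X U x0" "ftilde f X V (?g b) = b"
        using inv_into_into[OF ib] f_inv_into_f[OF ib] by auto
      obtain y where y: "y \<in> X" "gpath U x0 y (?g a)" using ga by (auto simp: GP_mem)
      have x0: "x0 \<in> X" using gp_pts[OF uX y(2)] by blast
      have "gp_htp E (?g a) (?g b)" using P2 x0 ga gb h by (auto simp: GP_def)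
      then show "(?g a, ?g b) \<in> W" using EW ga gb by blast
    qed
  qed
qed

lemma UE_from:
  assumes hX: "hausdorff_unif X U" and g1: "GP1 f X U Y V" and g2: "GP2 f X U Y V" and x0: "x0 \<in> X"
  shows "uniform_equivalence (GP X U x0) (GP_unif X U x0) (GP Y V (f x0)) (GP_unif Y V (f x0)) (ftilde f X V)"
proof -
  have bij: "bij_betw (ftilde f X V) (GP X U x0) (GP Y V (f x0))"
    unfolding bij_betw_def using ft_inj[OF hX g2] ft_image[OF g1 x0] by blast
  show ?thesis unfolding uniform_equivalence_def using bij ft_ucont ft_inv_ucont[OF g2 bij] by blast
qed

end

context
  fixes f :: "'a \<Rightarrow> 'b" and X :: "'a set" and U :: "('a \<times> 'a) set set"
    and Y :: "'b set" and V :: "('b \<times> 'b) set set"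
  assumes uX: "uniformity X U" and uY: "uniformity Y V" and gen: "generates_unif f X U Y V"
begin

lemma GP12_from:
  assumes uj: "uniformly_joinable X U" and cc: "chain_connected X U" and x0: "x0 \<in> X"
    and ue: "uniform_equivalence (GP X U x0) (GP_unif X U x0) (GP Y V (f x0)) (GP_unif Y V (f x0)) (ftilde f X V)"
  shows "GP1 f X U Y V \<and> GP2 f X U Y V"
proof -
  let ?ft = "ftilde f X V"
  have bij: "bij_betw ?ft (GP X U x0) (GP Y V (f x0))" using ue by (simp add: uniform_equivalence_def)
  have ic: "ucont (GP Y V (f x0)) (GP_unif Y V (f x0)) (GP_unif X U x0) (inv_into (GP X U x0) ?ft)"
    using ue by (simp add: uniform_equivalence_def)
  have img: "?ft ` GP X U x0 = GP Y V (f x0)" using bij by (simp add: bij_betw_def)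
  have inj: "inj_on ?ft (GP X U x0)" using bij by (simp add: bij_betw_def)
  have base2: "\<exists>F\<in>SE U. \<forall>a\<in>GP X U x0. \<forall>b\<in>GP X U x0.
       gp_htp (pimage f F) (?ft a) (?ft b) \<longrightarrow> gp_htp E a b" if E: "E \<in> SE U" for E
  proof -
    define W where "W = {(a,b). a \<in> GP X U x0 \<and> b \<in> GP X U x0 \<and> gp_htp E a b}"
    have "W \<in> GP_unif X U x0" unfolding GP_unif_def W_def using E by blast
    then have "{(a, b). a \<in> GP Y V (f x0) \<and> b \<in> GP Y V (f x0) \<and>
        (inv_into (GP X U x0) ?ft a, inv_into (GP X U x0) ?ft b) \<in> W} \<in> GP_unif Y V (f x0)"
      using ic unfolding ucont_def by blast
    then obtain G where G: "G \<in> SE V" and GS: "{(c, d). c \<in> GP Y V (f x0) \<and> d \<in> GP Y V (f x0) \<and> gp_htp G c d}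
       \<subseteq> {(a, b). a \<in> GP Y V (f x0) \<and> b \<in> GP Y V (f x0) \<and>
        (inv_into (GP X U x0) ?ft a, inv_into (GP X U x0) ?ft b) \<in> W}"
      unfolding GP_unif_def by blast
    obtain F where F: "F \<in> SE U" "pimage f F \<subseteq> G" using gen_sub[OF uX gen SE_U[OF G]] by blast
    have PF: "pimage f F \<in> SE V" by (rule pimage_SE[OF gen F(1)])
    have "gp_htp E a b" if a: "a \<in> GP X U x0" and b: "b \<in> GP X U x0"
      and h: "gp_htp (pimage f F) (?ft a) (?ft b)" for a b
    proof -
      obtain y where y: "gpath U x0 y a" using a by (auto simp: GP_def gpath_from_def)
      obtain y' where y': "gpath U x0 y' b" using b by (auto simp: GP_def gpath_from_def)
      have "gp_htp G (?ft a) (?ft b)"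
        by (rule gp_htp_mono[OF ft_gpath[OF uX uY gen y] ft_gpath[OF uX uY gen y'] PF G F(2) h])
      moreover have "?ft a \<in> GP Y V (f x0)" "?ft b \<in> GP Y V (f x0)" using ft_GP[OF uX uY gen] a b by auto
      ultimately have "(inv_into (GP X U x0) ?ft (?ft a), inv_into (GP X U x0) ?ft (?ft b)) \<in> W"
        using GS by blast
      then show ?thesis using inv_into_f_f[OF inj a] inv_into_f_f[OF inj b] unfolding W_def by simp
    qed
    then show ?thesis using F(1) by blast
  qed
  have g1: "GP1 f X U Y V"
    unfolding GP1_def
  proof (intro ballI allI impI)
    fix x1 c assume x1: "x1 \<in> X" and c: "gpath_from Y V (f x1) c"
    obtain w where w: "w \<in> Y" "gpath V (f x1) w c" using c by (auto simp: gpath_from_def)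
    obtain \<gamma> where \<gamma>: "gpath U x0 x1 \<gamma>" using points_gpath[OF uX uj cc x0 x1] by blast
    have fg: "gpath V (f x0) (f x1) (?ft \<gamma>)" by (rule ft_gpath[OF uX uY gen \<gamma>])
    have "gcat V (?ft \<gamma>) c \<in> GP Y V (f x0)" using gcat_gpath[OF fg w(2)] w(1) by (auto simp: GP_def gpath_from_def)
    then obtain d where d: "d \<in> GP X U x0" "?ft d = gcat V (?ft \<gamma>) c" using img by force
    obtain z where z: "z \<in> X" "gpath U x0 z d" using d(1) by (auto simp: GP_def gpath_from_def)
    have rg: "gpath U x1 x0 (grev U \<gamma>)" by (rule grev_gpath[OF \<gamma>])
    have d': "gpath U x1 z (gcat U (grev U \<gamma>) d)" by (rule gcat_gpath[OF rg z(2)])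
    have "?ft (gcat U (grev U \<gamma>) d) = gcat V (?ft (grev U \<gamma>)) (?ft d)" by (rule ft_cat[OF uX uY gen rg z(2)])
    also have "\<dots> = gcat V (grev V (?ft \<gamma>)) (gcat V (?ft \<gamma>) c)" using ft_rev[OF uX uY gen \<gamma>] d(2) by simp
    also have "\<dots> = c" by (rule gcat_cancel[OF fg w(2)])
    finally show "\<exists>d. gpath_from X U x1 d \<and> ?ft d = c" using d' z(1) by (auto simp: gpath_from_def)
  qed
  have g2: "GP2 f X U Y V"
    unfolding GP2_def
  proof (intro ballI)
    fix E assume E: "E \<in> SE U"
    obtain F where F: "F \<in> SE U" and P: "\<forall>a\<in>GP X U x0. \<forall>b\<in>GP X U x0.
       gp_htp (pimage f F) (?ft a) (?ft b) \<longrightarrow> gp_htp E a b" using base2[OF E] by blast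
    have PF: "pimage f F \<in> SE V" by (rule pimage_SE[OF gen F])
    have "gp_htp E \<alpha> \<beta>" if x1: "x1 \<in> X" and a: "gpath_from X U x1 \<alpha>" and b: "gpath_from X U x1 \<beta>"
      and h: "gp_htp (pimage f F) (?ft \<alpha>) (?ft \<beta>)" for x1 \<alpha> \<beta>
    proof -
      obtain y where y: "y \<in> X" "gpath U x1 y \<alpha>" using a by (auto simp: gpath_from_def)
      obtain y' where y': "y' \<in> X" "gpath U x1 y' \<beta>" using b by (auto simp: gpath_from_def)
      obtain \<gamma> where \<gamma>: "gpath U x0 x1 \<gamma>" using points_gpath[OF uX uj cc x0 x1] by blast
      have A: "gcat U \<gamma> \<alpha> \<in> GP X U x0" using gcat_gpath[OF \<gamma> y(2)] y(1) by (auto simp: GP_def gpath_from_def)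
      have B: "gcat U \<gamma> \<beta> \<in> GP X U x0" using gcat_gpath[OF \<gamma> y'(2)] y'(1) by (auto simp: GP_def gpath_from_def)
      have "gp_htp (pimage f F) (gcat V (?ft \<gamma>) (?ft \<alpha>)) (gcat V (?ft \<gamma>) (?ft \<beta>))"
        by (rule gp_htp_pre[OF ft_gpath[OF uX uY gen \<gamma>] ft_gpath[OF uX uY gen y(2)] ft_gpath[OF uX uY gen y'(2)] PF h])
      then have "gp_htp (pimage f F) (?ft (gcat U \<gamma> \<alpha>)) (?ft (gcat U \<gamma> \<beta>))"
        using ft_cat[OF uX uY gen \<gamma> y(2)] ft_cat[OF uX uY gen \<gamma> y'(2)] by simp
      then have "gp_htp E (gcat U \<gamma> \<alpha>) (gcat U \<gamma> \<beta>)" using P A B by blast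
      then show ?thesis by (rule gp_htp_cancel[OF \<gamma> y(2) y'(2) E])
    qed
    then show "\<exists>F\<in>SE U. \<forall>x0\<in>X. \<forall>\<alpha> \<beta>. gpath_from X U x0 \<alpha> \<and> gpath_from X U x0 \<beta>
       \<and> gp_htp (pimage f F) (?ft \<alpha>) (?ft \<beta>) \<longrightarrow> gp_htp E \<alpha> \<beta>" using F by blast
  qed
  show ?thesis using g1 g2 by blast
qed

end

theorem mainTheorem14:
  fixes f :: "'a \<Rightarrow> 'b" and X :: "'a set" and U :: "('a \<times> 'a) set set"
    and Y :: "'b set" and V :: "('b \<times> 'b) set set"
  assumes "uniformity X U" and "hausdorff_unif X U" and "X \<noteq> {}"
    and "uniformly_joinable X U" and "chain_connected X U"
    and "uniformity Y V" and "hausdorff_unif Y V"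
    and "generates_unif f X U Y V"
  shows "(gen_uniform_covering f X U Y V \<longleftrightarrow> GP1 f X U Y V \<and> GP2 f X U Y V)
       \<and> (GP1 f X U Y V \<and> GP2 f X U Y V \<longleftrightarrow>
          (\<exists>x0\<in>X. uniform_equivalence (GP X U x0) (GP_unif X U x0)
                     (GP Y V (f x0)) (GP_unif Y V (f x0)) (ftilde f X V)))"
proof (rule conjI; rule iffI)
  assume "gen_uniform_covering f X U Y V"
  then show "GP1 f X U Y V \<and> GP2 f X U Y V" by (simp add: gen_uniform_covering_def)
next
  assume g: "GP1 f X U Y V \<and> GP2 f X U Y V"
  show "gen_uniform_covering f X U Y V" unfolding gen_uniform_covering_def
    using g assms(8) C1_from[OF assms(1,6,8,4)] C2_from[OF assms(1,6,8,4)] by blast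
next
  assume g: "GP1 f X U Y V \<and> GP2 f X U Y V"
  obtain x0 where "x0 \<in> X" using assms(3) by blast
  then show "\<exists>x0\<in>X. uniform_equivalence (GP X U x0) (GP_unif X U x0)
                     (GP Y V (f x0)) (GP_unif Y V (f x0)) (ftilde f X V)"
    using UE_from[OF assms(1,6,8,2)] g by blast
next
  assume "\<exists>x0\<in>X. uniform_equivalence (GP X U x0) (GP_unif X U x0)
                     (GP Y V (f x0)) (GP_unif Y V (f x0)) (ftilde f X V)"
  then obtain x0 where "x0 \<in> X" "uniform_equivalence (GP X U x0) (GP_unif X U x0)
                     (GP Y V (f x0)) (GP_unif Y V (f x0)) (ftilde f X V)" by blast
  then show "GP1 f X U Y V \<and> GP2 f X U Y V" using GP12_from[OF assms(1,6,8,4,5)] by blast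
qed

end
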